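(* Let $n\ge2k$, $\lambda\in\Lambda^{\mathbf A_k}_n$ with $|\lambda^*|=m$, and $\kappa\vdash k$ with $\gamma_\kappa\in\mathcal A_k$ (i.e. any $\kappa$ for $\mathbf P_k,\mathbf B_k,\mathbf{RB}_k,\mathbf R_k$; only $\kappa=[1^k]$ for the planar algebras). Then $$\chi^\lambda_{\mathbf A_k}(\gamma_\kappa)=\sum_{\mu\vdash m}\mathsf F^{\mu,\kappa}_{\mathbf A_k}\,\chi^{\lambda^*}_{\mathfrak S_m}(\gamma_\mu),$$ where $\mathsf F^{\mu,\kappa}_{\mathbf A_k}=|\mathcal F^\mu_{\mathcal A_k}(\kappa)|$ and $\mathcal F^\mu_{\mathcal A_k}(\kappa)=\{w\in\mathcal W^m_{\mathcal A_k}:\gamma_\kappa\circ w\circ\gamma_\kappa^T=w,\ \sigma_{\gamma_\kappa,w}\text{ has cycle type }\mu\}$.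
   Context: $\mathcal P_k$: set partitions of $\{1,\dots,k,1',\dots,k'\}$ (blocks), drawn with top row $1..k$, bottom row $1'..k'$; $d_1\circ d_2$ concatenation (stack, identify middle rows, discard the $\ell(d_1,d_2)$ components lying entirely in the middle); $\mathbf P_k(n)$ has basis $\mathcal P_k$ with $d_1d_2=n^{\ell}d_1\circ d_2$; $\mathrm{pn}(d)$ = number of blocks meeting both rows. $\mathbf A_k$ is one of $\mathbf P_k(n),\mathbf R_k$ (blocks with at most one vertex per row), $\mathbf B_k(n)$ (blocks of size 2), $\mathbf{RB}_k(n)$ (size 1 or 2), $\mathbf{TL}_k(n),\mathbf M_k(n),\mathbf{PR}_k$ (planar diagrams of $\mathbf B_k,\mathbf{RB}_k,\mathbf R_k$; planar = drawable without crossings), with diagram basis $\mathcal A_k$. $\lambda^*$ = $\lambda$ minus first part; $\Lambda^{\mathbf A_k}_n$: $\{\lambda\vdash n:|\lambda^*|\le k\}$ for $\mathbf P,\mathbf{RB},\mathbf R$; additionally $|\lambda^*|\equiv k\bmod 2$ for $\mathbf B$; $\{[n-m,m]:m\le k\}$ for $\mathbf M,\mathbf{PR}$; additionally $m\equiv k\bmod 2$ for $\mathbf{TL}$. A permutation $\sigma\in\mathfrak S_r$ is the diagram with blocks $\{\sigma(j),j'\}$. $\gamma_r=(r,r-1,\dots,1)\in\mathfrak S_r$; for $\kappa=[\kappa_1,\dots,\kappa_\ell]$, $\gamma_\kappa=\gamma_{\kappa_1}\otimes\cdots\otimes\gamma_{\kappa_\ell}$, where $\otimes$ places diagrams side by side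 (left to right). $\chi^{\nu}_{\mathfrak S_m}(\gamma_\mu)$ is the irreducible $\mathfrak S_m$-character value on cycle type $\mu$. Symmetric $m$-diagrams: $d^T$ = reflection. A symmetric $m$-diagram is given by a set partition of $\{1..k\}$ with $m$ distinguished blocks; blocks $B\cup B'$ (distinguished) and $B,B'$ otherwise. $\mathcal W^m_{\mathcal A_k}$ = those in $\mathcal A_k$. Propagating blocks ordered by largest element; if $\mathrm{pn}(d\circ w\circ d^T)=m$, $\sigma_{d,w}\in\mathfrak S_m$ sends $i$ to $j$ when the $i$-th propagating block of $w$ is connected to the $j$-th of $d\circ w\circ d^T$. $\mathbf A^\lambda_k=\mathbb C\mathcal W^m_{\mathcal A_k}\otimes\mathfrak S^{\lambda^*}_m$ with $d\cdot(w\otimes v)=n^{\ell(d,w)}(d\circ w\circ d^T)\otimes\sigma_{d,w}v$ if $\mathrm{pn}(d\circ w\circ d^T)=m$, else $0$ ($\ell(d,w)$ = components discarded in $d\circ w$) is the irreducible module indexed by $\lambda$; $\chi^\lambda_{\mathbf A_k}$ is its character. *)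

theory Defs
  imports Complex_Main "HOL-Library.Disjoint_Sets" "HOL-Library.Multiset"
    "HOL-Combinatorics.Permutations"
begin

definition partition_of :: "nat \<Rightarrow> nat list \<Rightarrow> bool" where
  "partition_of n xs \<longleftrightarrow> sum_list xs = n \<and> (\<forall>x\<in>set xs. 0 < x) \<and> sorted_wrt (\<ge>) xs"

text \<open>Vertex (i, False) is the top vertex i, vertex (i, True) is the bottom vertex i'.\<close>

type_synonym vtx = "nat \<times> bool"
type_synonym diagram = "vtx set set"

definition verts :: "nat \<Rightarrow> vtx set" where
  "verts k = {1..k} \<times> UNIV"

definition top_row :: "vtx set" where "top_row = UNIV \<times> {False}"
definition bot_row :: "vtx set" where "bot_row = UNIV \<times> {True}"

text \<open>Stacking a list of diagrams: diagram number l occupies levels l (top) and l+1 (bottom).\<close>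

definition lift :: "nat \<Rightarrow> vtx \<Rightarrow> nat \<times> nat" where
  "lift l v = (fst v, if snd v then Suc l else l)"

definition stack_rel :: "diagram list \<Rightarrow> ((nat \<times> nat) \<times> (nat \<times> nat)) set" where
  "stack_rel ds = {(x, y). \<exists>l<length ds. \<exists>B\<in>ds ! l. x \<in> lift l ` B \<and> y \<in> lift l ` B}"

definition comps :: "diagram list \<Rightarrow> (nat \<times> nat) set set" where
  "comps ds = {(stack_rel ds)\<^sup>+ `` {x} | x. x \<in> Domain (stack_rel ds)}"

definition outer :: "nat \<Rightarrow> (nat \<times> nat) set" where
  "outer L = {p. snd p = 0 \<or> snd p = L}"

definition unembed :: "nat \<Rightarrow> nat \<times> nat \<Rightarrow> vtx" where
  "unembed L p = (fst p, snd p = L)"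

definition embed :: "nat \<Rightarrow> vtx \<Rightarrow> nat \<times> nat" where
  "embed L v = (fst v, if snd v then L else 0)"

definition stack :: "diagram list \<Rightarrow> diagram" where
  "stack ds = {unembed (length ds) ` (C \<inter> outer (length ds)) | C.
                 C \<in> comps ds \<and> C \<inter> outer (length ds) \<noteq> {}}"

definition ell :: "diagram list \<Rightarrow> nat" where
  "ell ds = card {C \<in> comps ds. C \<inter> outer (length ds) = {}}"

definition comp :: "diagram \<Rightarrow> diagram \<Rightarrow> diagram" (infixl "\<circ>\<^sub>d" 65) where
  "d1 \<circ>\<^sub>d d2 = stack [d1, d2]"

definition transp :: "diagram \<Rightarrow> diagram" where
  "transp d = (\<lambda>B. (\<lambda>v. (fst v, \<not> snd v)) ` B) ` d"

definition prop_blocks :: "diagram \<Rightarrow> vtx set set" where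
  "prop_blocks d = {B \<in> d. B \<inter> top_row \<noteq> {} \<and> B \<inter> bot_row \<noteq> {}}"

definition pn :: "diagram \<Rightarrow> nat" where
  "pn d = card (prop_blocks d)"

datatype alg = AP | AR | AB | ARB | ATL | AM | APR

definition pos :: "nat \<Rightarrow> vtx \<Rightarrow> nat" where
  "pos k v = (if snd v then 2 * k + 1 - fst v else fst v)"

text \<open>Planar: the set partition is non-crossing w.r.t. the boundary order 1,...,k,k',...,1'.\<close>
definition planar :: "nat \<Rightarrow> diagram \<Rightarrow> bool" where
  "planar k d \<longleftrightarrow> \<not> (\<exists>B\<in>d. \<exists>C\<in>d. B \<noteq> C \<and> (\<exists>a\<in>B. \<exists>c\<in>B. \<exists>b\<in>C. \<exists>e\<in>C.
       pos k a < pos k b \<and> pos k b < pos k c \<and> pos k c < pos k e))"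

definition rook_blocks :: "diagram \<Rightarrow> bool" where
  "rook_blocks d \<longleftrightarrow> (\<forall>B\<in>d. card (B \<inter> top_row) \<le> 1 \<and> card (B \<inter> bot_row) \<le> 1)"

definition brauer_blocks :: "diagram \<Rightarrow> bool" where
  "brauer_blocks d \<longleftrightarrow> (\<forall>B\<in>d. card B = 2)"

definition rb_blocks :: "diagram \<Rightarrow> bool" where
  "rb_blocks d \<longleftrightarrow> (\<forall>B\<in>d. card B = 1 \<or> card B = 2)"

fun alg_cond :: "alg \<Rightarrow> nat \<Rightarrow> diagram \<Rightarrow> bool" where
  "alg_cond AP k d = True"
| "alg_cond AR k d = rook_blocks d"
| "alg_cond AB k d = brauer_blocks d"
| "alg_cond ARB k d = rb_blocks d"
| "alg_cond ATL k d = (brauer_blocks d \<and> planar k d)"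
| "alg_cond AM k d = (rb_blocks d \<and> planar k d)"
| "alg_cond APR k d = (rook_blocks d \<and> planar k d)"

definition diagrams :: "alg \<Rightarrow> nat \<Rightarrow> diagram set" where
  "diagrams A k = {d. partition_on (verts k) d \<and> alg_cond A k d}"

fun Lambda :: "alg \<Rightarrow> nat \<Rightarrow> nat \<Rightarrow> nat list set" where
  "Lambda AP n k = {lam. partition_of n lam \<and> sum_list (tl lam) \<le> k}"
| "Lambda ARB n k = {lam. partition_of n lam \<and> sum_list (tl lam) \<le> k}"
| "Lambda AR n k = {lam. partition_of n lam \<and> sum_list (tl lam) \<le> k}"
| "Lambda AB n k = {lam. partition_of n lam \<and> sum_list (tl lam) \<le> k \<and>
                        even (sum_list (tl lam)) = even k}"
| "Lambda AM n k = {lam. partition_of n lam \<and> length lam \<le> 2 \<and> sum_list (tl lam) \<le> k}"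
| "Lambda APR n k = {lam. partition_of n lam \<and> length lam \<le> 2 \<and> sum_list (tl lam) \<le> k}"
| "Lambda ATL n k = {lam. partition_of n lam \<and> length lam \<le> 2 \<and> sum_list (tl lam) \<le> k \<and>
                        even (sum_list (tl lam)) = even k}"

definition perm_diagram :: "nat \<Rightarrow> (nat \<Rightarrow> nat) \<Rightarrow> diagram" where
  "perm_diagram k \<sigma> = {{(\<sigma> j, False), (j, True)} | j. j \<in> {1..k}}"

text \<open>gam s parts: the product of the cycles (s+a, s+a-1, ..., s+1) placed side by side.\<close>
fun gam :: "nat \<Rightarrow> nat list \<Rightarrow> nat \<Rightarrow> nat" where
  "gam s [] j = j"
| "gam s (a # as) j = (if s < j \<and> j \<le> s + a then (if j = s + 1 then s + a else j - 1)
                        else gam (s + a) as j)"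

definition gamma :: "nat list \<Rightarrow> nat \<Rightarrow> nat" where
  "gamma \<kappa> = gam 0 \<kappa>"

definition orb :: "(nat \<Rightarrow> nat) \<Rightarrow> nat \<Rightarrow> nat set" where
  "orb \<sigma> x = {(\<sigma> ^^ i) x | i. True}"

definition cycle_type :: "(nat \<Rightarrow> nat) \<Rightarrow> nat \<Rightarrow> nat multiset" where
  "cycle_type \<sigma> m = image_mset card (mset_set {orb \<sigma> x | x. x \<in> {1..m}})"

definition sym_mdiagrams :: "alg \<Rightarrow> nat \<Rightarrow> nat \<Rightarrow> diagram set" where
  "sym_mdiagrams A k m = {d \<in> diagrams A k. transp d = d \<and>
      (\<forall>B\<in>d. B \<subseteq> top_row \<or> B \<subseteq> bot_row \<or> (\<exists>S. B = S \<times> UNIV)) \<and> pn d = m}"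

definition maxtop :: "vtx set \<Rightarrow> nat" where
  "maxtop B = Max {i. (i, False) \<in> B}"

text \<open>1-based index of a propagating block, ordered by largest element.\<close>
definition pidx :: "diagram \<Rightarrow> vtx set \<Rightarrow> nat" where
  "pidx d B = Suc (card {C \<in> prop_blocks d. maxtop C < maxtop B})"

definition sigma_dw :: "diagram \<Rightarrow> diagram \<Rightarrow> nat \<Rightarrow> nat" where
  "sigma_dw d w i = (if i \<in> {1..pn w} then
     (THE j. \<exists>P\<in>prop_blocks w. \<exists>Q\<in>prop_blocks (d \<circ>\<^sub>d w \<circ>\<^sub>d transp d).
        pidx w P = i \<and> pidx (d \<circ>\<^sub>d w \<circ>\<^sub>d transp d) Q = j \<and>
        (\<exists>x\<in>P. \<exists>y\<in>Q. (lift 1 x, embed 3 y) \<in> (stack_rel [d, w, transp d])\<^sup>*))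
     else i)"

definition lin_comb :: "(nat \<Rightarrow> 'x \<Rightarrow> complex) \<Rightarrow> nat \<Rightarrow> (nat \<Rightarrow> complex) \<Rightarrow> 'x \<Rightarrow> complex" where
  "lin_comb bs r c = (\<lambda>x. \<Sum>i<r. c i * bs i x)"

definition is_basis_of :: "('x \<Rightarrow> complex) set \<Rightarrow> (nat \<Rightarrow> 'x \<Rightarrow> complex) \<Rightarrow> nat \<Rightarrow> bool" where
  "is_basis_of U bs r \<longleftrightarrow>
     (\<forall>c. lin_comb bs r c = (\<lambda>x. 0) \<longrightarrow> (\<forall>i<r. c i = 0)) \<and>
     {lin_comb bs r c | c. True} = U"

definition trace_on :: "('x \<Rightarrow> complex) set \<Rightarrow> (('x \<Rightarrow> complex) \<Rightarrow> ('x \<Rightarrow> complex)) \<Rightarrow> complex" where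
  "trace_on U f = (let br = (SOME br. is_basis_of U (fst br) (snd br)); bs = fst br; r = snd br in
     \<Sum>i<r. (THE c. (\<forall>j\<ge>r. c j = 0) \<and> f (bs i) = lin_comb bs r c) i)"

type_synonym tabloid = "nat \<Rightarrow> nat"

definition young :: "nat list \<Rightarrow> (nat \<times> nat) set" where
  "young \<nu> = {(r, c). r < length \<nu> \<and> c < \<nu> ! r}"

definition tableaux :: "nat list \<Rightarrow> (nat \<times> nat \<Rightarrow> nat) set" where
  "tableaux \<nu> = {T. bij_betw T (young \<nu>) {1..sum_list \<nu>} \<and> (\<forall>p. p \<notin> young \<nu> \<longrightarrow> T p = 0)}"

definition cell_of :: "nat list \<Rightarrow> (nat \<times> nat \<Rightarrow> nat) \<Rightarrow> nat \<Rightarrow> nat \<times> nat" where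
  "cell_of \<nu> T x = (THE p. p \<in> young \<nu> \<and> T p = x)"

definition tabloid_of :: "nat list \<Rightarrow> (nat \<times> nat \<Rightarrow> nat) \<Rightarrow> tabloid" where
  "tabloid_of \<nu> T = (\<lambda>x. if x \<in> {1..sum_list \<nu>} then fst (cell_of \<nu> T x) else 0)"

definition col_stab :: "nat list \<Rightarrow> (nat \<times> nat \<Rightarrow> nat) \<Rightarrow> (nat \<Rightarrow> nat) set" where
  "col_stab \<nu> T = {\<pi>. \<pi> permutes {1..sum_list \<nu>} \<and>
      (\<forall>x\<in>{1..sum_list \<nu>}. snd (cell_of \<nu> T (\<pi> x)) = snd (cell_of \<nu> T x))}"

definition polytabloid :: "nat list \<Rightarrow> (nat \<times> nat \<Rightarrow> nat) \<Rightarrow> tabloid \<Rightarrow> complex" where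
  "polytabloid \<nu> T = (\<lambda>t. \<Sum>\<pi>\<in>col_stab \<nu> T.
      of_int (sign \<pi>) * (if tabloid_of \<nu> T \<circ> inv \<pi> = t then 1 else 0))"

definition specht :: "nat list \<Rightarrow> (tabloid \<Rightarrow> complex) set" where
  "specht \<nu> = {(\<lambda>t. \<Sum>T\<in>tableaux \<nu>. c T * polytabloid \<nu> T t) | c. True}"

text \<open>Action of a permutation sigma on the permutation module: delta_t maps to delta_(sigma t).\<close>
definition perm_act :: "(nat \<Rightarrow> nat) \<Rightarrow> (tabloid \<Rightarrow> complex) \<Rightarrow> (tabloid \<Rightarrow> complex)" where
  "perm_act \<sigma> f = (\<lambda>t. f (t \<circ> \<sigma>))"

definition chi_S :: "nat list \<Rightarrow> (nat \<Rightarrow> nat) \<Rightarrow> complex" where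
  "chi_S \<nu> \<sigma> = trace_on (specht \<nu>) (perm_act \<sigma>)"

text \<open>Elements of C W^m (x) S^nu are represented as functions on (symmetric diagram, tabloid).\<close>
definition amod :: "alg \<Rightarrow> nat \<Rightarrow> nat list \<Rightarrow> (diagram \<times> tabloid \<Rightarrow> complex) set" where
  "amod A k lam = {F. (\<forall>w t. w \<notin> sym_mdiagrams A k (sum_list (tl lam)) \<longrightarrow> F (w, t) = 0) \<and>
      (\<forall>w\<in>sym_mdiagrams A k (sum_list (tl lam)). (\<lambda>t. F (w, t)) \<in> specht (tl lam))}"

definition amod_act :: "alg \<Rightarrow> nat \<Rightarrow> nat \<Rightarrow> nat list \<Rightarrow> diagram \<Rightarrow>
    (diagram \<times> tabloid \<Rightarrow> complex) \<Rightarrow> (diagram \<times> tabloid \<Rightarrow> complex)" where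
  "amod_act A n k lam d F = (\<lambda>(w', t).
     \<Sum>w\<in>{w \<in> sym_mdiagrams A k (sum_list (tl lam)).
            pn (d \<circ>\<^sub>d w \<circ>\<^sub>d transp d) = sum_list (tl lam) \<and> d \<circ>\<^sub>d w \<circ>\<^sub>d transp d = w'}.
       of_nat n ^ ell [d, w] * perm_act (sigma_dw d w) (\<lambda>s. F (w, s)) t)"

definition chi_A :: "alg \<Rightarrow> nat \<Rightarrow> nat \<Rightarrow> nat list \<Rightarrow> diagram \<Rightarrow> complex" where
  "chi_A A n k lam d = trace_on (amod A k lam) (amod_act A n k lam d)"

definition F_set :: "alg \<Rightarrow> nat \<Rightarrow> nat \<Rightarrow> nat list \<Rightarrow> nat list \<Rightarrow> diagram set" where
  "F_set A k m \<mu> \<kappa> = {w \<in> sym_mdiagrams A k m.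
      perm_diagram k (gamma \<kappa>) \<circ>\<^sub>d w \<circ>\<^sub>d transp (perm_diagram k (gamma \<kappa>)) = w \<and>
      cycle_type (sigma_dw (perm_diagram k (gamma \<kappa>)) w) m = mset \<mu>}"

end

theory Submission
  imports Defs "HOL-Combinatorics.Orbits"
begin


definition subsp :: "('x \<Rightarrow> complex) set \<Rightarrow> bool" where
  "subsp U \<longleftrightarrow> (\<lambda>x. 0) \<in> U \<and> (\<forall>u\<in>U. \<forall>v\<in>U. \<forall>a b. (\<lambda>x. a * u x + b * v x) \<in> U)"

definition linfun_on :: "('x \<Rightarrow> complex) set \<Rightarrow> (('x \<Rightarrow> complex) \<Rightarrow> complex) \<Rightarrow> bool" where
  "linfun_on U p \<longleftrightarrow> (\<forall>u\<in>U. \<forall>v\<in>U. \<forall>a b. p (\<lambda>x. a * u x + b * v x) = a * p u + b * p v)"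

definition linmap_on :: "('x \<Rightarrow> complex) set \<Rightarrow> (('x \<Rightarrow> complex) \<Rightarrow> ('x \<Rightarrow> complex)) \<Rightarrow> bool" where
  "linmap_on U f \<longleftrightarrow> (\<forall>u\<in>U. f u \<in> U) \<and>
     (\<forall>u\<in>U. \<forall>v\<in>U. \<forall>a b. f (\<lambda>x. a * u x + b * v x) = (\<lambda>x. a * f u x + b * f v x))"

definition frame :: "('x \<Rightarrow> complex) set \<Rightarrow> 'i set \<Rightarrow> ('i \<Rightarrow> 'x \<Rightarrow> complex) \<Rightarrow>
    ('i \<Rightarrow> ('x \<Rightarrow> complex) \<Rightarrow> complex) \<Rightarrow> bool" where
  "frame U I b p \<longleftrightarrow> subsp U \<and> finite I \<and> (\<forall>i\<in>I. b i \<in> U) \<and>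
     (\<forall>u\<in>U. u = (\<lambda>x. \<Sum>i\<in>I. p i u * b i x)) \<and>
     (\<forall>i\<in>I. \<forall>j\<in>I. p i (b j) = (if i = j then 1 else 0)) \<and>
     (\<forall>i\<in>I. linfun_on U (p i))"

lemma subspD: "subsp U \<Longrightarrow> u \<in> U \<Longrightarrow> v \<in> U \<Longrightarrow> (\<lambda>x. a * u x + b * v x) \<in> U"
  by (simp add: subsp_def)
lemma subsp0: "subsp U \<Longrightarrow> (\<lambda>x. 0) \<in> U"
  by (simp add: subsp_def)
lemma linfunD: "linfun_on U p \<Longrightarrow> u \<in> U \<Longrightarrow> v \<in> U \<Longrightarrow> p (\<lambda>x. a * u x + b * v x) = a * p u + b * p v"
  by (simp add: linfun_on_def)
lemma linmapD: "linmap_on U f \<Longrightarrow> u \<in> U \<Longrightarrow> v \<in> U \<Longrightarrow> f (\<lambda>x. a * u x + b * v x) = (\<lambda>x. a * f u x + b * f v x)"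
  by (simp add: linmap_on_def)
lemma linmapU: "linmap_on U f \<Longrightarrow> u \<in> U \<Longrightarrow> f u \<in> U"
  by (simp add: linmap_on_def)

lemma subsp_sum:
  assumes "subsp U" "finite J" "\<forall>j\<in>J. v j \<in> U"
  shows "(\<lambda>x. \<Sum>j\<in>J. c j * v j x) \<in> U"
  using assms(2,3)
proof (induction J rule: finite_induct)
  case empty then show ?case using assms(1) by (simp add: subsp_def)
next
  case (insert j J)
  then have "(\<lambda>x. c j * v j x + 1 * (\<Sum>j\<in>J. c j * v j x)) \<in> U"
    using subspD[OF assms(1), of "v j" "\<lambda>x. \<Sum>j\<in>J. c j * v j x" "c j" 1] insert by simp
  then show ?case using insert by simp
qed

lemma linfun_zero:
  assumes "subsp U" "linfun_on U p" shows "p (\<lambda>x. 0) = 0"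
proof -
  have z: "(\<lambda>x. 0::complex) \<in> U" using assms(1) by (simp add: subsp_def)
  have "p (\<lambda>x. 0 * (0::complex) + 0 * 0) = 0 * p (\<lambda>x. 0) + 0 * p (\<lambda>x. 0)"
    using linfunD[OF assms(2) z z] by blast
  then show ?thesis by simp
qed

lemma linfun_sum:
  assumes "subsp U" "linfun_on U p" "finite J" "\<forall>j\<in>J. v j \<in> U"
  shows "p (\<lambda>x. \<Sum>j\<in>J. c j * v j x) = (\<Sum>j\<in>J. c j * p (v j))"
  using assms(3,4)
proof (induction J rule: finite_induct)
  case empty then show ?case using linfun_zero[OF assms(1,2)] by simp
next
  case (insert j J)
  have inU: "(\<lambda>x. \<Sum>j\<in>J. c j * v j x) \<in> U" using subsp_sum[OF assms(1)] insert by auto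
  have "p (\<lambda>x. c j * v j x + 1 * (\<Sum>j\<in>J. c j * v j x)) = c j * p (v j) + 1 * p (\<lambda>x. \<Sum>j\<in>J. c j * v j x)"
    using linfunD[OF assms(2) _ inU] insert(4) by blast
  then show ?case using insert by simp
qed

lemma linmap_zero:
  assumes "subsp U" "linmap_on U f" shows "f (\<lambda>x. 0) = (\<lambda>x. 0)"
proof -
  have z: "(\<lambda>x. 0::complex) \<in> U" using assms(1) by (simp add: subsp_def)
  have "f (\<lambda>x. 0 * (0::complex) + 0 * 0) = (\<lambda>x. 0 * f (\<lambda>x. 0) x + 0 * f (\<lambda>x. 0) x)"
    using linmapD[OF assms(2) z z] by blast
  then show ?thesis by simp
qed

lemma linmap_sum:
  assumes "subsp U" "linmap_on U f" "finite J" "\<forall>j\<in>J. v j \<in> U"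
  shows "f (\<lambda>x. \<Sum>j\<in>J. c j * v j x) = (\<lambda>x. \<Sum>j\<in>J. c j * f (v j) x)"
  using assms(3,4)
proof (induction J rule: finite_induct)
  case empty then show ?case using linmap_zero[OF assms(1,2)] by simp
next
  case (insert j J)
  have inU: "(\<lambda>x. \<Sum>j\<in>J. c j * v j x) \<in> U" using subsp_sum[OF assms(1)] insert by auto
  have "f (\<lambda>x. c j * v j x + 1 * (\<Sum>j\<in>J. c j * v j x)) =
        (\<lambda>x. c j * f (v j) x + 1 * f (\<lambda>x. \<Sum>j\<in>J. c j * v j x) x)"
    using linmapD[OF assms(2) _ inU] insert(4) by blast
  then show ?case using insert by simp
qed

lemma frame_trace_eq:
  assumes F1: "frame U I b p" and F2: "frame U J b' q" and f: "linmap_on U f"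
  shows "(\<Sum>j\<in>J. q j (f (b' j))) = (\<Sum>i\<in>I. p i (f (b i)))"
proof -
  have sU: "subsp U" and fI: "finite I" and bU: "\<forall>i\<in>I. b i \<in> U"
    and exp1: "\<forall>u\<in>U. u = (\<lambda>x. \<Sum>i\<in>I. p i u * b i x)" and lp: "\<forall>i\<in>I. linfun_on U (p i)"
    using F1 unfolding frame_def by auto
  have fJ: "finite J" and b'U: "\<forall>j\<in>J. b' j \<in> U"
    and exp2: "\<forall>u\<in>U. u = (\<lambda>x. \<Sum>j\<in>J. q j u * b' j x)" and lq: "\<forall>j\<in>J. linfun_on U (q j)"
    using F2 unfolding frame_def by auto
  have fU: "\<forall>u\<in>U. f u \<in> U" using f unfolding linmap_on_def by auto
  have "(\<Sum>j\<in>J. q j (f (b' j))) = (\<Sum>j\<in>J. \<Sum>i\<in>I. p i (b' j) * q j (f (b i)))"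
  proof (rule sum.cong[OF refl])
    fix j assume j: "j \<in> J"
    have "f (b' j) = f (\<lambda>x. \<Sum>i\<in>I. p i (b' j) * b i x)" using exp1 b'U j by metis
    also have "\<dots> = (\<lambda>x. \<Sum>i\<in>I. p i (b' j) * f (b i) x)"
      by (rule linmap_sum[OF sU f fI bU])
    finally have "q j (f (b' j)) = q j (\<lambda>x. \<Sum>i\<in>I. p i (b' j) * f (b i) x)" by simp
    also have "\<dots> = (\<Sum>i\<in>I. p i (b' j) * q j (f (b i)))"
      by (rule linfun_sum[OF sU lq[rule_format, OF j] fI]) (use fU bU in auto)
    finally show "q j (f (b' j)) = (\<Sum>i\<in>I. p i (b' j) * q j (f (b i)))" .
  qed
  also have "\<dots> = (\<Sum>i\<in>I. \<Sum>j\<in>J. q j (f (b i)) * p i (b' j))"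
    by (subst sum.swap) (simp add: mult_ac)
  also have "\<dots> = (\<Sum>i\<in>I. p i (f (b i)))"
  proof (rule sum.cong[OF refl])
    fix i assume i: "i \<in> I"
    have "p i (\<lambda>x. \<Sum>j\<in>J. q j (f (b i)) * b' j x) = (\<Sum>j\<in>J. q j (f (b i)) * p i (b' j))"
      by (rule linfun_sum[OF sU lp[rule_format, OF i] fJ b'U])
    moreover have "(\<lambda>x. \<Sum>j\<in>J. q j (f (b i)) * b' j x) = f (b i)"
      using exp2 fU bU i by metis
    ultimately show "(\<Sum>j\<in>J. q j (f (b i)) * p i (b' j)) = p i (f (b i))" by simp
  qed
  finally show ?thesis .
qed

lemma delta_sum:
  assumes "finite A" shows "(\<Sum>j\<in>A. (if j = i then 1 else 0) * f j) = (if i \<in> A then f i else (0::complex))"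
proof -
  have "(\<Sum>j\<in>A. (if j = i then 1 else 0) * f j) = (\<Sum>j\<in>A. if j = i then f j else 0)"
    by (intro sum.cong) auto
  then show ?thesis using assms by (simp add: sum.delta')
qed

lemma delta_sum':
  assumes "finite A" shows "(\<Sum>j\<in>A. f j * (if i = j then 1 else 0)) = (if i \<in> A then f i else (0::complex))"
proof -
  have "(\<Sum>j\<in>A. f j * (if i = j then 1 else 0)) = (\<Sum>j\<in>A. if i = j then f j else 0)"
    by (intro sum.cong) auto
  then show ?thesis using assms by (simp add: sum.delta)
qed

definition coord :: "(nat \<Rightarrow> 'x \<Rightarrow> complex) \<Rightarrow> nat \<Rightarrow> ('x \<Rightarrow> complex) \<Rightarrow> nat \<Rightarrow> complex" where
  "coord bs r u = (THE c. (\<forall>j\<ge>r. c j = 0) \<and> u = lin_comb bs r c)"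

lemma lin_comb_cong: "(\<And>i. i < r \<Longrightarrow> c i = d i) \<Longrightarrow> lin_comb bs r c = lin_comb bs r d"
  unfolding lin_comb_def by (intro ext sum.cong) auto

lemma basis_coord:
  assumes B: "is_basis_of U bs r" and u: "u \<in> U"
  shows "(\<forall>j\<ge>r. coord bs r u j = 0) \<and> u = lin_comb bs r (coord bs r u)"
proof -
  have ind: "\<And>c. lin_comb bs r c = (\<lambda>x. 0) \<Longrightarrow> \<forall>i<r. c i = 0" and sp: "{lin_comb bs r c | c. True} = U"
    using B unfolding is_basis_of_def by auto
  obtain c where c: "u = lin_comb bs r c" using sp u by auto
  define c' where "c' = (\<lambda>j. if j < r then c j else 0)"
  have ex: "(\<forall>j\<ge>r. c' j = 0) \<and> u = lin_comb bs r c'"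
    using c lin_comb_cong[of r c' c bs] by (auto simp: c'_def)
  have uniq: "d = c'" if d: "(\<forall>j\<ge>r. d j = 0) \<and> u = lin_comb bs r d" for d
  proof -
    have "lin_comb bs r (\<lambda>i. d i - c' i) = (\<lambda>x. 0)"
      using d ex unfolding lin_comb_def by (auto simp: algebra_simps sum_subtractf fun_eq_iff)
    from ind[OF this] have "\<forall>i<r. d i = c' i" by auto
    with d ex show ?thesis by (metis not_le ext)
  qed
  have "coord bs r u = c'" unfolding coord_def
    using ex uniq by (intro the_equality) auto
  with ex show ?thesis by simp
qed

lemma basis_coord_unique:
  assumes B: "is_basis_of U bs r" and "\<forall>j\<ge>r. d j = 0" "u = lin_comb bs r d"
  shows "coord bs r u = d"
proof -
  have ind: "\<And>c. lin_comb bs r c = (\<lambda>x. 0) \<Longrightarrow> \<forall>i<r. c i = 0" and sp: "{lin_comb bs r c | c. True} = U"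
    using B unfolding is_basis_of_def by auto
  have u: "u \<in> U" using sp assms(3) by auto
  note ex = basis_coord[OF B u]
  have "lin_comb bs r (\<lambda>i. d i - coord bs r u i) = (\<lambda>x. 0)"
    using assms(3) ex unfolding lin_comb_def by (auto simp: algebra_simps sum_subtractf fun_eq_iff)
  from ind[OF this] have "\<forall>i<r. d i = coord bs r u i" by auto
  with assms(2) ex show ?thesis by (metis not_le ext)
qed

lemma basis_frame:
  assumes B: "is_basis_of U bs r"
  shows "frame U {..<r} bs (\<lambda>i u. coord bs r u i)"
proof -
  have sp: "{lin_comb bs r c | c. True} = U" using B unfolding is_basis_of_def by auto
  have sU: "subsp U" unfolding subsp_def
  proof (intro conjI ballI allI)
    show "(\<lambda>x. 0) \<in> U" using sp[symmetric] by (auto simp: lin_comb_def intro!: exI[of _ "\<lambda>_. 0"])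
    fix u v a b assume "u \<in> U" "v \<in> U"
    then obtain c d where "u = lin_comb bs r c" "v = lin_comb bs r d" using sp by blast
    then have "(\<lambda>x. a * u x + b * v x) = lin_comb bs r (\<lambda>i. a * c i + b * d i)"
      by (auto simp: lin_comb_def fun_eq_iff sum_distrib_left sum.distrib algebra_simps)
    then show "(\<lambda>x. a * u x + b * v x) \<in> U" using sp by blast
  qed
  have bU: "bs i \<in> U" if "i < r" for i
  proof -
    have "bs i = lin_comb bs r (\<lambda>j. if j = i then 1 else 0)"
      using that by (auto simp: lin_comb_def fun_eq_iff delta_sum)
    then show ?thesis using sp by blast
  qed
  show ?thesis unfolding frame_def
  proof (intro conjI ballI)
    show "subsp U" by fact
    show "finite {..<r}" by simp
    show "bs i \<in> U" if "i \<in> {..<r}" for i using bU that by simp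
    show "u = (\<lambda>x. \<Sum>i\<in>{..<r}. coord bs r u i * bs i x)" if "u \<in> U" for u
      using basis_coord[OF B that] unfolding lin_comb_def by simp
    show "coord bs r (bs j) i = (if i = j then 1 else 0)" if "i \<in> {..<r}" "j \<in> {..<r}" for i j
    proof -
      have "coord bs r (bs j) = (\<lambda>l. if l = j then 1 else 0)"
        using that by (intro basis_coord_unique[OF B]) (auto simp: lin_comb_def fun_eq_iff delta_sum)
      then show ?thesis by auto
    qed
    show "linfun_on U (\<lambda>u. coord bs r u i)" for i
      unfolding linfun_on_def
    proof (intro ballI allI)
      fix u v a b assume u: "u \<in> U" and v: "v \<in> U"
      note cu = basis_coord[OF B u] and cv = basis_coord[OF B v]
      have "coord bs r (\<lambda>x. a * u x + b * v x) = (\<lambda>l. a * coord bs r u l + b * coord bs r v l)"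
      proof (rule basis_coord_unique[OF B])
        show "\<forall>j\<ge>r. a * coord bs r u j + b * coord bs r v j = 0" using cu cv by simp
        have "(\<lambda>x. a * u x + b * v x) = (\<lambda>x. a * lin_comb bs r (coord bs r u) x + b * lin_comb bs r (coord bs r v) x)"
          using cu cv by metis
        then show "(\<lambda>x. a * u x + b * v x) = lin_comb bs r (\<lambda>l. a * coord bs r u l + b * coord bs r v l)"
          by (auto simp: lin_comb_def fun_eq_iff sum_distrib_left sum.distrib algebra_simps)
      qed
      then show "coord bs r (\<lambda>x. a * u x + b * v x) i = a * coord bs r u i + b * coord bs r v i" by simp
    qed
  qed
qed

lemma frame_basis:
  assumes F: "frame U I b p"
  shows "\<exists>bs r. is_basis_of U bs r"
proof -
  have sU: "subsp U" and fI: "finite I" and bU: "\<forall>i\<in>I. b i \<in> U"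
    and exp1: "\<forall>u\<in>U. u = (\<lambda>x. \<Sum>i\<in>I. p i u * b i x)" and lp: "\<forall>i\<in>I. linfun_on U (p i)"
    and dl: "\<forall>i\<in>I. \<forall>j\<in>I. p i (b j) = (if i = j then 1 else 0)"
    using F unfolding frame_def by auto
  obtain h where h: "bij_betw h {0..<card I} I" using ex_bij_betw_nat_finite[OF fI] by blast
  define r where "r = card I"
  have hr: "bij_betw h {..<r} I" using h by (simp add: r_def atLeast0LessThan)
  have lc: "lin_comb (b \<circ> h) r c = (\<lambda>x. \<Sum>i\<in>I. c (inv_into {..<r} h i) * b i x)" for c
    unfolding lin_comb_def
  proof (intro ext)
    fix x
    have "(\<Sum>i\<in>I. c (inv_into {..<r} h i) * b i x) = (\<Sum>l\<in>{..<r}. c (inv_into {..<r} h (h l)) * b (h l) x)"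
      by (rule sum.reindex_bij_betw[OF hr, symmetric])
    also have "\<dots> = (\<Sum>l<r. c l * (b \<circ> h) l x)"
      using hr by (intro sum.cong) (auto simp: bij_betw_inv_into_left)
    finally show "(\<Sum>i<r. c i * (b \<circ> h) i x) = (\<Sum>i\<in>I. c (inv_into {..<r} h i) * b i x)" by simp
  qed
  show ?thesis
  proof (intro exI[of _ "b \<circ> h"] exI[of _ r], unfold is_basis_of_def, intro conjI allI impI)
    fix c i assume z: "lin_comb (b \<circ> h) r c = (\<lambda>x. 0)" and i: "i < r"
    have hi: "h i \<in> I" using hr i by (auto simp: bij_betw_def)
    have "p (h i) (\<lambda>x. \<Sum>j\<in>I. c (inv_into {..<r} h j) * b j x) = (\<Sum>j\<in>I. c (inv_into {..<r} h j) * p (h i) (b j))"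
      by (rule linfun_sum[OF sU lp[rule_format, OF hi] fI bU])
    also have "\<dots> = (\<Sum>j\<in>I. c (inv_into {..<r} h j) * (if h i = j then 1 else 0))"
      using dl hi by (intro sum.cong) auto
    also have "\<dots> = c (inv_into {..<r} h (h i))"
      using hi fI by (simp add: delta_sum')
    also have "\<dots> = c i" using hr i by (simp add: bij_betw_inv_into_left)
    finally have "c i = p (h i) (lin_comb (b \<circ> h) r c)" using lc by simp
    then show "c i = 0" using z linfun_zero[OF sU] lp hi by simp
  next
    show "{lin_comb (b \<circ> h) r c |c. True} = U"
    proof (intro set_eqI iffI)
      fix u assume "u \<in> {lin_comb (b \<circ> h) r c |c. True}"
      then obtain c where "u = lin_comb (b \<circ> h) r c" by auto
      then show "u \<in> U" using lc subsp_sum[OF sU fI bU] by simp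
    next
      fix u assume u: "u \<in> U"
      have "u = lin_comb (b \<circ> h) r (\<lambda>l. p (h l) u)"
        unfolding lc using exp1 u hr by (simp add: bij_betw_inv_into_right)
      then show "u \<in> {lin_comb (b \<circ> h) r c |c. True}" by blast
    qed
  qed
qed

lemma trace_on_frame:
  assumes F: "frame U I b p" and f: "linmap_on U f"
  shows "trace_on U f = (\<Sum>i\<in>I. p i (f (b i)))"
proof -
  define br where "br = (SOME br. is_basis_of U (fst br) (snd br))"
  obtain bs0 r0 where B0: "is_basis_of U bs0 r0" using frame_basis[OF F] by blast
  have B: "is_basis_of U (fst br) (snd br)"
    unfolding br_def by (rule someI[of "\<lambda>br. is_basis_of U (fst br) (snd br)" "(bs0, r0)"]) (simp add: B0)
  have fU: "\<forall>u\<in>U. f u \<in> U" using f unfolding linmap_on_def by auto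
  have bU: "fst br i \<in> U" if "i < snd br" for i
    using basis_frame[OF B] that unfolding frame_def by auto
  have "trace_on U f = (\<Sum>i<snd br. coord (fst br) (snd br) (f (fst br i)) i)"
    unfolding trace_on_def Let_def br_def[symmetric] coord_def by (rule refl)
  also have "\<dots> = (\<Sum>i\<in>I. p i (f (b i)))"
    using frame_trace_eq[OF basis_frame[OF B] F f] by simp
  finally show ?thesis .
qed

lemma aux_solve: "(L::complex) + c * G = 0 \<Longrightarrow> c \<noteq> 0 \<Longrightarrow> G = (- 1 / c) * L"
proof -
  assume h: "L + c * G = 0" and ne: "c \<noteq> 0"
  have "c * G = - L" using h by (simp add: add_eq_0_iff)
  then have "G = (- L) / c" using ne by (metis nonzero_mult_div_cancel_left)
  then show ?thesis by simp
qed

section \<open>Spans of finite families have bases\<close>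

definition span_of :: "'i set \<Rightarrow> ('i \<Rightarrow> 'x \<Rightarrow> complex) \<Rightarrow> ('x \<Rightarrow> complex) set" where
  "span_of I g = {(\<lambda>x. \<Sum>i\<in>I. c i * g i x) | c. True}"

lemma span_of_basis:
  assumes "finite I" shows "\<exists>bs r. is_basis_of (span_of I g) bs r"
  using assms
proof (induction I rule: finite_induct)
  case empty
  show ?case
    by (rule exI[of _ "\<lambda>_ _. 0"], rule exI[of _ 0])
      (auto simp: is_basis_of_def span_of_def lin_comb_def)
next
  case (insert i I)
  then obtain bs r where B: "is_basis_of (span_of I g) bs r" by blast
  have ind: "\<And>c. lin_comb bs r c = (\<lambda>x. 0) \<Longrightarrow> \<forall>j<r. c j = 0"
    and sp: "{lin_comb bs r c | c. True} = span_of I g" using B unfolding is_basis_of_def by auto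
  have ins: "span_of (insert i I) g = {(\<lambda>x. v x + e * g i x) | v e. v \<in> span_of I g}"
  proof (intro set_eqI iffI)
    fix u assume "u \<in> span_of (insert i I) g"
    then obtain c where "u = (\<lambda>x. \<Sum>j\<in>insert i I. c j * g j x)" by (auto simp: span_of_def)
    then have "u = (\<lambda>x. (\<Sum>j\<in>I. c j * g j x) + c i * g i x)" using insert by (simp add: add.commute)
    then show "u \<in> {(\<lambda>x. v x + e * g i x) | v e. v \<in> span_of I g}" by (auto simp: span_of_def)
  next
    fix u assume "u \<in> {(\<lambda>x. v x + e * g i x) | v e. v \<in> span_of I g}"
    then obtain c e where u: "u = (\<lambda>x. (\<Sum>j\<in>I. c j * g j x) + e * g i x)" by (auto simp: span_of_def)
    have "\<forall>x. (\<Sum>j\<in>I. (c(i := e)) j * g j x) = (\<Sum>j\<in>I. c j * g j x)"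
      using insert(2) by (auto intro!: sum.cong)
    then have "u = (\<lambda>x. \<Sum>j\<in>insert i I. (c(i := e)) j * g j x)"
      unfolding u using insert by (auto simp: add.commute)
    then show "u \<in> span_of (insert i I) g" by (auto simp: span_of_def)
  qed
  have lcsum: "\<And>c d. (\<lambda>x. lin_comb bs r c x + lin_comb bs r d x) = lin_comb bs r (\<lambda>j. c j + d j)"
    by (auto simp: lin_comb_def fun_eq_iff sum.distrib algebra_simps)
  have lcscale: "\<And>a c. (\<lambda>x. a * lin_comb bs r c x) = lin_comb bs r (\<lambda>j. a * c j)"
    by (auto simp: lin_comb_def fun_eq_iff sum_distrib_left algebra_simps)
  show ?case
  proof (cases "g i \<in> span_of I g")
    case True
    then obtain d where d: "g i = lin_comb bs r d" using sp by blast
    have "span_of (insert i I) g = span_of I g"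
    proof (intro set_eqI iffI)
      fix u assume "u \<in> span_of (insert i I) g"
      then obtain v e where ue: "u = (\<lambda>x. v x + e * g i x)" "v \<in> span_of I g" using ins by blast
      then obtain c where "v = lin_comb bs r c" using sp by blast
      with ue have u: "u = (\<lambda>x. lin_comb bs r c x + e * g i x)" by simp
      have "u = (\<lambda>x. lin_comb bs r c x + e * lin_comb bs r d x)" using u d by simp
      also have "\<dots> = lin_comb bs r (\<lambda>j. c j + e * d j)"
        by (auto simp: lin_comb_def fun_eq_iff sum_distrib_left sum.distrib algebra_simps)
      finally show "u \<in> span_of I g" using sp by blast
    next
      fix u assume "u \<in> span_of I g"
      then have "(\<lambda>x. u x + 0 * g i x) \<in> span_of (insert i I) g" using ins by blast
      then show "u \<in> span_of (insert i I) g" by simp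
    qed
    then show ?thesis using B by metis
  next
    case False
    define bs' where "bs' = bs(r := g i)"
    have lc': "lin_comb bs' (Suc r) c = (\<lambda>x. lin_comb bs r c x + c r * g i x)" for c
      by (auto simp: lin_comb_def bs'_def fun_eq_iff intro!: sum.cong)
    show ?thesis
    proof (intro exI[of _ bs'] exI[of _ "Suc r"], unfold is_basis_of_def, intro conjI allI impI)
      fix c j assume z: "lin_comb bs' (Suc r) c = (\<lambda>x. 0)" and j: "j < Suc r"
      have cr: "c r = 0"
      proof (rule ccontr)
        assume ne: "c r \<noteq> 0"
        have "g i = (\<lambda>x. (- 1 / c r) * lin_comb bs r c x)"
        proof
          fix x
          have "lin_comb bs r c x + c r * g i x = 0" using fun_cong[OF z[unfolded lc'], of x] by simp
          then show "g i x = (- 1 / c r) * lin_comb bs r c x" using ne by (rule aux_solve)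
        qed
        also have "\<dots> = lin_comb bs r (\<lambda>j. (- 1 / c r) * c j)" by (rule lcscale)
        finally show False using False sp by blast
      qed
      have "lin_comb bs r c = (\<lambda>x. 0)" using z cr unfolding lc' by simp
      then show "c j = 0" using ind cr j by (cases "j = r") auto
    next
      show "{lin_comb bs' (Suc r) c |c. True} = span_of (insert i I) g"
      proof (intro set_eqI iffI)
        fix u assume "u \<in> {lin_comb bs' (Suc r) c |c. True}"
        then obtain c where "u = (\<lambda>x. lin_comb bs r c x + c r * g i x)" using lc' by auto
        then show "u \<in> span_of (insert i I) g" using ins sp by blast
      next
        fix u assume "u \<in> span_of (insert i I) g"
        then obtain v e where ue: "u = (\<lambda>x. v x + e * g i x)" "v \<in> span_of I g" using ins by blast
      then obtain c where "v = lin_comb bs r c" using sp by blast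
      with ue have u: "u = (\<lambda>x. lin_comb bs r c x + e * g i x)" by simp
        have "lin_comb bs r c = lin_comb bs r (c(r := e))" by (rule lin_comb_cong) auto
        then have "u = lin_comb bs' (Suc r) (c(r := e))" unfolding lc' u by simp
        then show "u \<in> {lin_comb bs' (Suc r) c |c. True}" by blast
      qed
    qed
  qed
qed

lemma span_of_frame:
  assumes "finite I"
  shows "\<exists>bs r. frame (span_of I g) {..<r} bs (\<lambda>i u. coord bs r u i)"
  using span_of_basis[OF assms] basis_frame by blast


definition rot :: "nat \<Rightarrow> nat \<Rightarrow> nat \<Rightarrow> nat" where
  "rot s a j = (if s < j \<and> j \<le> s + a then (if j = s + 1 then s + a else j - 1) else j)"

definition rot' :: "nat \<Rightarrow> nat \<Rightarrow> nat \<Rightarrow> nat" where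
  "rot' s a j = (if s < j \<and> j \<le> s + a then (if j = s + a then s + 1 else j + 1) else j)"

lemma rot_permutes: "rot s a permutes {s+1..s+a}"
proof -
  have "rot s a \<circ> rot' s a = id" "rot' s a \<circ> rot s a = id"
    by (auto simp: rot_def rot'_def fun_eq_iff)
  then have b: "bij (rot s a)" by (metis o_bij)
  show ?thesis unfolding permutes_def
  proof (intro conjI allI impI)
    fix x assume "x \<notin> {s+1..s+a}" then show "rot s a x = x" by (auto simp: rot_def)
  next
    fix y show "\<exists>!x. rot s a x = y" using b unfolding bij_iff by blast
  qed
qed

lemma gam_gt: "s < j \<Longrightarrow> s < gam s as j"
proof (induction as arbitrary: s)
  case Nil then show ?case by simp
next
  case (Cons a as)
  show ?case
  proof (cases "s < j \<and> j \<le> s + a")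
    case True then show ?thesis by auto
  next
    case False
    then have "s + a < j" using Cons.prems by auto
    then have "s + a < gam (s + a) as j" by (rule Cons.IH)
    then show ?thesis using False by auto
  qed
qed

lemma gam_outside: "j \<notin> {s+1..s+sum_list as} \<Longrightarrow> gam s as j = j"
  by (induction as arbitrary: s) auto

lemma gam_split: "gam s (a # as) = rot s a \<circ> gam (s + a) as"
proof
  fix j
  show "gam s (a # as) j = (rot s a \<circ> gam (s + a) as) j"
  proof (cases "s < j \<and> j \<le> s + a")
    case True
    then have "gam (s + a) as j = j" by (intro gam_outside) auto
    then show ?thesis using True by (simp add: rot_def)
  next
    case False
    show ?thesis
    proof (cases "j \<le> s")
      case True
      then have "gam (s + a) as j = j" by (intro gam_outside) auto
      then show ?thesis using False by (auto simp: rot_def)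
    next
      case F2: False
      then have "s + a < j" using False by auto
      then have "s + a < gam (s + a) as j" by (rule gam_gt)
      then show ?thesis using False by (auto simp: rot_def)
    qed
  qed
qed

lemma gam_permutes: "gam s as permutes {s+1..s+sum_list as}"
proof (induction as arbitrary: s)
  case Nil
  show ?case by (simp add: permutes_id[unfolded id_def])
next
  case (Cons a as)
  have "rot s a permutes {s+1..s+sum_list (a#as)}"
    by (rule permutes_subset[OF rot_permutes]) auto
  moreover have "gam (s + a) as permutes {s+1..s+sum_list (a#as)}"
    by (rule permutes_subset[OF Cons]) auto
  ultimately show ?case unfolding gam_split by (rule permutes_compose[rotated])
qed

lemma gamma_permutes: "gamma \<kappa> permutes {1..sum_list \<kappa>}"
  using gam_permutes[of 0 \<kappa>] by (simp add: gamma_def)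

section \<open>Orbits\<close>

lemma orb_orbit: "permutation \<sigma> \<Longrightarrow> orb \<sigma> x = orbit \<sigma> x"
  by (simp add: orb_def orbit_altdef_permutation)

lemma orbit_facts:
  assumes p: "permutation \<sigma>"
  shows "x \<in> orbit \<sigma> x" "finite (orbit \<sigma> x)" "card (orbit \<sigma> x) = funpow_dist1 \<sigma> x x"
    "(\<sigma> ^^ card (orbit \<sigma> x)) x = x"
    "bij_betw (\<lambda>i. (\<sigma> ^^ i) x) {..<card (orbit \<sigma> x)} (orbit \<sigma> x)"
    "0 < card (orbit \<sigma> x)"
proof -
  show xi: "x \<in> orbit \<sigma> x" by (rule permutation_self_in_orbit[OF p])
  show "finite (orbit \<sigma> x)" by (rule finite_orbit[OF xi])
  have e: "orbit \<sigma> x = (\<lambda>n. (\<sigma> ^^ n) x) ` {0..<funpow_dist1 \<sigma> x x}"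
    by (rule orbit_conv_funpow_dist1[OF xi])
  have i: "inj_on (\<lambda>n. (\<sigma> ^^ n) x) {0..<funpow_dist1 \<sigma> x x}" by (rule inj_on_funpow_dist1[OF xi])
  show c: "card (orbit \<sigma> x) = funpow_dist1 \<sigma> x x"
    unfolding e using card_image[OF i] by simp
  show "(\<sigma> ^^ card (orbit \<sigma> x)) x = x" unfolding c by (rule funpow_dist1_prop[OF xi])
  show "bij_betw (\<lambda>i. (\<sigma> ^^ i) x) {..<card (orbit \<sigma> x)} (orbit \<sigma> x)"
    unfolding c bij_betw_def using i e by (simp add: atLeast0LessThan)
  show "0 < card (orbit \<sigma> x)" unfolding c by simp
qed

lemma orbit_same:
  assumes p: "permutation \<sigma>" and y: "y \<in> orbit \<sigma> x"
  shows "orbit \<sigma> y = orbit \<sigma> x"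
  using orbit_cyclic_eq3[OF cyclic_on_orbit'[OF p] y] .

lemma orbit_step_in:
  assumes p: "permutation \<sigma>" and y: "y \<in> orbit \<sigma> x"
  shows "\<sigma> y \<in> orbit \<sigma> x"
  using funpow_in_orbit[OF y, of 1] by simp

lemma list_from_mset:
  assumes "finite A" "image_mset f (mset_set A) = mset ys"
  shows "\<exists>xs. distinct xs \<and> set xs = A \<and> map f xs = ys"
  using assms
proof (induction ys arbitrary: A)
  case Nil
  then show ?case by (auto simp: mset_set_empty_iff)
next
  case (Cons y ys)
  have "y \<in># image_mset f (mset_set A)" using Cons.prems(2) by simp
  then have "y \<in> f ` A" using Cons.prems(1) by (simp only: in_image_mset finite_set_mset_mset_set)
  then obtain a where a: "a \<in> A" "f a = y" by blast
  have r: "mset_set A = add_mset a (mset_set (A - {a}))" using mset_set.remove[OF Cons.prems(1) a(1)] .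
  have "add_mset y (image_mset f (mset_set (A - {a}))) = add_mset y (mset ys)"
    using Cons.prems(2) unfolding r using a(2) by simp
  then have "image_mset f (mset_set (A - {a})) = mset ys" by simp
  moreover have "finite (A - {a})" using Cons.prems(1) by simp
  ultimately obtain xs where xs: "distinct xs" "set xs = A - {a}" "map f xs = ys"
    using Cons.IH by blast
  show ?case using xs a by (intro exI[of _ "a # xs"]) auto
qed

fun tau :: "(nat \<Rightarrow> nat) \<Rightarrow> nat \<Rightarrow> nat set list \<Rightarrow> nat \<Rightarrow> nat" where
  "tau \<sigma> s [] j = j"
| "tau \<sigma> s (B # Bs) j = (if s < j \<and> j \<le> s + card B then (\<sigma> ^^ (card B - (j - s))) (SOME x. x \<in> B)
      else tau \<sigma> (s + card B) Bs j)"

lemma tau_outside: "j \<notin> {s+1..s+sum_list (map card Bs)} \<Longrightarrow> tau \<sigma> s Bs j = j"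
  by (induction Bs arbitrary: s) auto

definition good :: "(nat \<Rightarrow> nat) \<Rightarrow> nat set \<Rightarrow> bool" where
  "good \<sigma> B \<longleftrightarrow> (\<exists>x. B = orbit \<sigma> x)"

lemma good_facts:
  assumes p: "permutation \<sigma>" and g: "good \<sigma> B"
  defines "x0 \<equiv> SOME x. x \<in> B"
  shows "x0 \<in> B" "B = orbit \<sigma> x0" "0 < card B" "(\<sigma> ^^ card B) x0 = x0"
    "bij_betw (\<lambda>i. (\<sigma> ^^ i) x0) {..<card B} B"
proof -
  obtain x where x: "B = orbit \<sigma> x" using g by (auto simp: good_def)
  then have "x \<in> B" using orbit_facts(1)[OF p] by simp
  then show x0: "x0 \<in> B" unfolding x0_def by (rule someI)
  show B: "B = orbit \<sigma> x0" using orbit_same[OF p, of x0 x] x0 x by simp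
  show "0 < card B" "(\<sigma> ^^ card B) x0 = x0" "bij_betw (\<lambda>i. (\<sigma> ^^ i) x0) {..<card B} B"
    using orbit_facts[OF p, of x0] B by simp_all
qed

lemma tau_comm:
  assumes p: "permutation \<sigma>" and g: "\<forall>B\<in>set Bs. good \<sigma> B"
    and j: "s < j" "j \<le> s + sum_list (map card Bs)"
  shows "\<sigma> (tau \<sigma> s Bs j) = tau \<sigma> s Bs (gam s (map card Bs) j)"
  using g j
proof (induction Bs arbitrary: s)
  case Nil then show ?case by simp
next
  case (Cons B Bs)
  define a where "a = card B"
  define x0 where "x0 = (SOME x. x \<in> B)"
  have gO: "good \<sigma> B" using Cons.prems by simp
  note gf = good_facts[OF p gO, folded x0_def a_def]
  show ?case
  proof (cases "s < j \<and> j \<le> s + a")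
    case True
    show ?thesis
    proof (cases "j = s + 1")
      case True2: True
      have "gam s (map card (B # Bs)) j = s + a" using True True2 by (simp add: a_def)
      then have r: "tau \<sigma> s (B # Bs) (gam s (map card (B # Bs)) j) = x0"
        using gf(3) by (simp add: a_def[symmetric] x0_def[symmetric])
      have "tau \<sigma> s (B # Bs) j = (\<sigma> ^^ (a - 1)) x0"
        using True True2 by (simp add: a_def[symmetric] x0_def[symmetric])
      then have "\<sigma> (tau \<sigma> s (B # Bs) j) = (\<sigma> ^^ Suc (a - 1)) x0" by simp
      also have "Suc (a - 1) = a" using gf(3) by simp
      finally show ?thesis using r gf(4) by simp
    next
      case False2: False
      have "gam s (map card (B # Bs)) j = j - 1" using True False2 by (simp add: a_def)
      moreover have "s < j - 1 \<and> j - 1 \<le> s + a" using True False2 by auto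
      ultimately have r: "tau \<sigma> s (B # Bs) (gam s (map card (B # Bs)) j) = (\<sigma> ^^ (a - (j - 1 - s))) x0"
        by (simp add: a_def[symmetric] x0_def[symmetric])
      have "tau \<sigma> s (B # Bs) j = (\<sigma> ^^ (a - (j - s))) x0"
        using True by (simp add: a_def[symmetric] x0_def[symmetric])
      then have "\<sigma> (tau \<sigma> s (B # Bs) j) = (\<sigma> ^^ Suc (a - (j - s))) x0" by simp
      also have "Suc (a - (j - s)) = a - (j - 1 - s)" using True False2 by auto
      finally show ?thesis using r by simp
    qed
  next
    case False
    then have j2: "s + a < j" using Cons.prems by auto
    have "gam s (map card (B # Bs)) j = gam (s + a) (map card Bs) j" using False by (auto simp: a_def)
    moreover have "s + a < gam (s + a) (map card Bs) j" by (rule gam_gt[OF j2])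
    ultimately have "tau \<sigma> s (B # Bs) (gam s (map card (B # Bs)) j) = tau \<sigma> (s + a) Bs (gam (s + a) (map card Bs) j)"
      by (simp add: a_def[symmetric])
    moreover have "tau \<sigma> s (B # Bs) j = tau \<sigma> (s + a) Bs j" using False by (auto simp: a_def[symmetric])
    moreover have "\<sigma> (tau \<sigma> (s + a) Bs j) = tau \<sigma> (s + a) Bs (gam (s + a) (map card Bs) j)"
      using Cons.IH[of "s + a"] Cons.prems j2 by (simp add: a_def)
    ultimately show ?thesis by simp
  qed
qed

lemma tau_bij:
  assumes p: "permutation \<sigma>" and g: "\<forall>B\<in>set Bs. good \<sigma> B" and d: "distinct Bs"
    and dj: "\<forall>B\<in>set Bs. \<forall>C\<in>set Bs. B \<noteq> C \<longrightarrow> B \<inter> C = {}"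
  shows "bij_betw (tau \<sigma> s Bs) {s+1..s+sum_list (map card Bs)} (\<Union>(set Bs))"
  using g d dj
proof (induction Bs arbitrary: s)
  case Nil then show ?case by (simp add: bij_betw_def)
next
  case (Cons B Bs)
  define a where "a = card B"
  define x0 where "x0 = (SOME x. x \<in> B)"
  have gO: "good \<sigma> B" using Cons.prems by simp
  note gf = good_facts[OF p gO, folded x0_def a_def]
  have b1: "bij_betw (\<lambda>j. a - (j - s)) {s+1..s+a} {..<a}"
    by (rule bij_betw_byWitness[where f'="\<lambda>i. s + a - i"]) auto
  have b2: "bij_betw (\<lambda>j. (\<sigma> ^^ (a - (j - s))) x0) {s+1..s+a} B"
    using bij_betw_trans[OF b1 gf(5)] by (simp add: o_def)
  have b2': "bij_betw (tau \<sigma> s (B # Bs)) {s+1..s+a} B"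
    using b2 by (rule bij_betw_cong[THEN iffD1, rotated]) (auto simp: a_def x0_def)
  have b3: "bij_betw (tau \<sigma> (s + a) Bs) {s+a+1..s+a+sum_list (map card Bs)} (\<Union>(set Bs))"
    using Cons.IH[of "s + a"] Cons.prems by auto
  have b3': "bij_betw (tau \<sigma> s (B # Bs)) {s+a+1..s+a+sum_list (map card Bs)} (\<Union>(set Bs))"
    using b3 by (rule bij_betw_cong[THEN iffD1, rotated]) (auto simp: a_def)
  have disj: "B \<inter> \<Union>(set Bs) = {}" using Cons.prems by auto
  have "bij_betw (tau \<sigma> s (B # Bs)) ({s+1..s+a} \<union> {s+a+1..s+a+sum_list (map card Bs)}) (B \<union> \<Union>(set Bs))"
    by (rule bij_betw_combine[OF b2' b3' disj])
  moreover have "{s+1..s+a} \<union> {s+a+1..s+a+sum_list (map card Bs)} = {s+1..s+sum_list (map card (B # Bs))}"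
    by (auto simp: a_def)
  ultimately show ?case by (simp del: tau.simps)
qed

lemma orbits_partition:
  assumes sp: "\<sigma> permutes {1..m}"
  defines "Orbs \<equiv> {orbit \<sigma> x | x. x \<in> {1..m}}"
  shows "finite Orbs" "\<Union>Orbs = {1..m}" "\<forall>B\<in>Orbs. \<forall>C\<in>Orbs. B \<noteq> C \<longrightarrow> B \<inter> C = {}"
    "\<forall>B\<in>Orbs. good \<sigma> B" "\<forall>B\<in>Orbs. finite B"
proof -
  have p: "permutation \<sigma>" using sp by (auto simp: permutation_permutes)
  have e: "Orbs = (orbit \<sigma>) ` {1..m}" unfolding Orbs_def by auto
  show "finite Orbs" unfolding e by simp
  show "\<Union>Orbs = {1..m}"
    using permutes_orbit_subset[OF sp] orbit_facts(1)[OF p] unfolding e by blast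
  show "\<forall>B\<in>Orbs. \<forall>C\<in>Orbs. B \<noteq> C \<longrightarrow> B \<inter> C = {}"
    unfolding e using orbit_same[OF p] by blast
  show "\<forall>B\<in>Orbs. good \<sigma> B" unfolding e good_def by auto
  show "\<forall>B\<in>Orbs. finite B" unfolding e using orbit_facts(2)[OF p] by auto
qed

lemma cycle_type_orbits:
  assumes sp: "\<sigma> permutes {1..m}"
  shows "cycle_type \<sigma> m = image_mset card (mset_set {orbit \<sigma> x | x. x \<in> {1..m}})"
proof -
  have p: "permutation \<sigma>" using sp by (auto simp: permutation_permutes)
  show ?thesis unfolding cycle_type_def orb_orbit[OF p] ..
qed

theorem conj_gamma:
  assumes sp: "\<sigma> permutes {1..m}" and mu: "partition_of m \<mu>" and ct: "cycle_type \<sigma> m = mset \<mu>"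
  shows "\<exists>\<tau>. \<tau> permutes {1..m} \<and> \<sigma> = \<tau> \<circ> gamma \<mu> \<circ> inv \<tau>"
proof -
  have p: "permutation \<sigma>" using sp by (auto simp: permutation_permutes)
  define Orbs where "Orbs = {orbit \<sigma> x | x. x \<in> {1..m}}"
  note op = orbits_partition[OF sp, folded Orbs_def]
  have "image_mset card (mset_set Orbs) = mset \<mu>" using ct cycle_type_orbits[OF sp] Orbs_def by simp
  then obtain os where os: "distinct os" "set os = Orbs" "map card os = \<mu>"
    using list_from_mset[OF op(1)] by blast
  define \<tau> where "\<tau> = tau \<sigma> 0 os"
  have sm: "sum_list (map card os) = m" using os(3) mu by (simp add: partition_of_def)
  have bj: "bij_betw \<tau> {1..m} {1..m}"
    using tau_bij[OF p, of os 0] os op sm by (simp add: \<tau>_def)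
  have tp: "\<tau> permutes {1..m}"
    by (rule bij_imp_permutes[OF bj]) (use tau_outside[of _ 0 os \<sigma>] sm in \<open>auto simp: \<tau>_def\<close>)
  have comm: "\<sigma> \<circ> \<tau> = \<tau> \<circ> gamma \<mu>"
  proof
    fix j
    show "(\<sigma> \<circ> \<tau>) j = (\<tau> \<circ> gamma \<mu>) j"
    proof (cases "j \<in> {1..m}")
      case True
      then show ?thesis using tau_comm[OF p, of os 0 j] os op sm
        by (auto simp: \<tau>_def gamma_def)
    next
      case False
      have "\<tau> j = j" using permutes_not_in[OF tp False] .
      moreover have "gamma \<mu> j = j" using gam_outside[of j 0 \<mu>] False os(3) sm by (auto simp: gamma_def)
      moreover have "\<sigma> j = j" using permutes_not_in[OF sp False] .
      ultimately show ?thesis by simp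
    qed
  qed
  have "\<sigma> = \<sigma> \<circ> (\<tau> \<circ> inv \<tau>)" using permutes_inv_o(1)[OF tp] by simp
  also have "\<dots> = \<tau> \<circ> gamma \<mu> \<circ> inv \<tau>" using comm by (simp add: o_assoc)
  finally show ?thesis using tp by blast
qed

theorem exists_partition:
  assumes sp: "\<sigma> permutes {1..m}"
  shows "\<exists>\<mu>. partition_of m \<mu> \<and> cycle_type \<sigma> m = mset \<mu>"
proof -
  have p: "permutation \<sigma>" using sp by (auto simp: permutation_permutes)
  define Orbs where "Orbs = {orbit \<sigma> x | x. x \<in> {1..m}}"
  note op = orbits_partition[OF sp, folded Orbs_def]
  obtain xs where xs: "mset xs = cycle_type \<sigma> m" using ex_mset by blast
  define \<mu> where "\<mu> = rev (sort xs)"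
  have ms: "mset \<mu> = cycle_type \<sigma> m" by (simp add: \<mu>_def xs)
  have ct: "cycle_type \<sigma> m = image_mset card (mset_set Orbs)" using cycle_type_orbits[OF sp] Orbs_def by simp
  have "sum_list \<mu> = sum_mset (mset \<mu>)" by (simp add: sum_mset_sum_list)
  also have "\<dots> = (\<Sum>B\<in>Orbs. card B)" unfolding ms ct by (simp add: sum_unfold_sum_mset)
  also have "\<dots> = card (\<Union>Orbs)" using op by (intro card_Union_disjoint[symmetric]) (auto simp: pairwise_def disjnt_def)
  also have "\<dots> = m" using op by simp
  finally have s: "sum_list \<mu> = m" .
  have pos: "\<forall>x\<in>set \<mu>. 0 < x"
  proof
    fix x assume "x \<in> set \<mu>"
    then have "x \<in># image_mset card (mset_set Orbs)" using ms ct by (metis set_mset_mset)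
    then obtain B where "B \<in> Orbs" "x = card B" using op(1) by auto
    then show "0 < x" using op(4) good_facts(3)[OF p] by auto
  qed
  have "sorted_wrt (\<ge>) \<mu>" unfolding \<mu>_def sorted_wrt_rev by (simp add: sorted_sort)
  then show ?thesis using s pos ms by (auto simp: partition_of_def)
qed

lemma partition_unique:
  assumes "partition_of m \<mu>" "partition_of m' \<nu>" "mset \<mu> = mset \<nu>"
  shows "\<mu> = \<nu>"
proof -
  have "sorted (rev \<mu>)" "sorted (rev \<nu>)" using assms(1,2)
    by (auto simp: partition_of_def sorted_wrt_rev)
  moreover have "mset (rev \<mu>) = mset (rev \<nu>)" using assms(3) by simp
  ultimately have "rev \<mu> = rev \<nu>" by (metis properties_for_sort)
  then show ?thesis by simp
qed


lemma perm_act_comp: "perm_act \<sigma> (perm_act \<tau> f) = perm_act (\<sigma> \<circ> \<tau>) f"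
  by (simp add: perm_act_def o_assoc)

lemma perm_act_id: "perm_act id f = f"
  by (simp add: perm_act_def)

context
  fixes \<nu> :: "nat list" and \<sigma> :: "nat \<Rightarrow> nat"
  assumes sp: "\<sigma> permutes {1..sum_list \<nu>}"
begin

lemma cell_of_comp: "cell_of \<nu> (\<sigma> \<circ> T) x = cell_of \<nu> T (inv \<sigma> x)"
proof -
  have "(\<lambda>p. p \<in> young \<nu> \<and> (\<sigma> \<circ> T) p = x) = (\<lambda>p. p \<in> young \<nu> \<and> T p = inv \<sigma> x)"
    using permutes_inverses[OF sp] by (auto simp: fun_eq_iff)
  then show ?thesis unfolding cell_of_def by simp
qed

lemma tabloid_comp: "tabloid_of \<nu> (\<sigma> \<circ> T) = tabloid_of \<nu> T \<circ> inv \<sigma>"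
proof
  fix x
  have ip: "inv \<sigma> permutes {1..sum_list \<nu>}" by (rule permutes_inv[OF sp])
  show "tabloid_of \<nu> (\<sigma> \<circ> T) x = (tabloid_of \<nu> T \<circ> inv \<sigma>) x"
  proof (cases "x \<in> {1..sum_list \<nu>}")
    case True
    then have "inv \<sigma> x \<in> {1..sum_list \<nu>}" using permutes_in_image[OF ip] by blast
    then show ?thesis using True by (simp add: tabloid_of_def cell_of_comp)
  next
    case False
    then have "inv \<sigma> x = x" using permutes_not_in[OF ip] by blast
    then show ?thesis using False by (auto simp: tabloid_of_def)
  qed
qed

lemma inv_conj: "bij \<pi> \<Longrightarrow> inv (\<sigma> \<circ> \<pi> \<circ> inv \<sigma>) = \<sigma> \<circ> inv \<pi> \<circ> inv \<sigma>"
proof -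
  assume b: "bij \<pi>"
  have bs: "bij \<sigma>" using permutes_bij[OF sp] .
  have bis: "bij (inv \<sigma>)" using bij_imp_bij_inv[OF bs] .
  have "inv (\<sigma> \<circ> \<pi> \<circ> inv \<sigma>) = inv (inv \<sigma>) \<circ> inv (\<sigma> \<circ> \<pi>)"
    by (rule o_inv_distrib[OF bij_comp[OF b bs] bis])
  also have "\<dots> = \<sigma> \<circ> (inv \<pi> \<circ> inv \<sigma>)"
    using o_inv_distrib[OF bs b] permutes_inv_inv[OF sp] by simp
  finally show ?thesis by (simp add: o_assoc)
qed

lemma col_stab_comp: "col_stab \<nu> (\<sigma> \<circ> T) = (\<lambda>\<pi>. \<sigma> \<circ> \<pi> \<circ> inv \<sigma>) ` col_stab \<nu> T"
proof (intro set_eqI iffI)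
  have ip: "inv \<sigma> permutes {1..sum_list \<nu>}" by (rule permutes_inv[OF sp])
  fix \<pi>' assume a: "\<pi>' \<in> col_stab \<nu> (\<sigma> \<circ> T)"
  define \<pi> where "\<pi> = inv \<sigma> \<circ> \<pi>' \<circ> \<sigma>"
  have pp: "\<pi>' permutes {1..sum_list \<nu>}" using a by (simp add: col_stab_def)
  have e: "\<sigma> \<circ> \<pi> \<circ> inv \<sigma> = \<pi>'"
  proof -
    have "\<sigma> \<circ> \<pi> \<circ> inv \<sigma> = (\<sigma> \<circ> inv \<sigma>) \<circ> \<pi>' \<circ> (\<sigma> \<circ> inv \<sigma>)" by (simp add: \<pi>_def comp_assoc)
    then show ?thesis using permutes_inv_o(1)[OF sp] by simp
  qed
  have "\<pi> permutes {1..sum_list \<nu>}" unfolding \<pi>_def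
    by (intro permutes_compose[OF sp] permutes_compose[OF pp ip])
  moreover have "snd (cell_of \<nu> T (\<pi> y)) = snd (cell_of \<nu> T y)" if y: "y \<in> {1..sum_list \<nu>}" for y
  proof -
    have sy: "\<sigma> y \<in> {1..sum_list \<nu>}" using permutes_in_image[OF sp] y by blast
    have "snd (cell_of \<nu> (\<sigma> \<circ> T) (\<pi>' (\<sigma> y))) = snd (cell_of \<nu> (\<sigma> \<circ> T) (\<sigma> y))"
      using a sy by (simp add: col_stab_def)
    then show ?thesis by (simp add: cell_of_comp \<pi>_def permutes_inverses[OF sp])
  qed
  ultimately have "\<pi> \<in> col_stab \<nu> T" by (simp add: col_stab_def)
  then show "\<pi>' \<in> (\<lambda>\<pi>. \<sigma> \<circ> \<pi> \<circ> inv \<sigma>) ` col_stab \<nu> T" using e by blast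
next
  have ip: "inv \<sigma> permutes {1..sum_list \<nu>}" by (rule permutes_inv[OF sp])
  fix \<pi>' assume "\<pi>' \<in> (\<lambda>\<pi>. \<sigma> \<circ> \<pi> \<circ> inv \<sigma>) ` col_stab \<nu> T"
  then obtain \<pi> where \<pi>: "\<pi> \<in> col_stab \<nu> T" and e: "\<pi>' = \<sigma> \<circ> \<pi> \<circ> inv \<sigma>" by blast
  have pp: "\<pi> permutes {1..sum_list \<nu>}" using \<pi> by (simp add: col_stab_def)
  have "\<pi>' permutes {1..sum_list \<nu>}" unfolding e
    by (intro permutes_compose[OF ip] permutes_compose[OF pp sp])
  moreover have "snd (cell_of \<nu> (\<sigma> \<circ> T) (\<pi>' x)) = snd (cell_of \<nu> (\<sigma> \<circ> T) x)" if x: "x \<in> {1..sum_list \<nu>}" for x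
  proof -
    have ix: "inv \<sigma> x \<in> {1..sum_list \<nu>}" using permutes_in_image[OF ip] x by blast
    have "snd (cell_of \<nu> T (\<pi> (inv \<sigma> x))) = snd (cell_of \<nu> T (inv \<sigma> x))"
      using \<pi> ix by (simp add: col_stab_def)
    then show ?thesis by (simp add: cell_of_comp e permutes_inverses[OF sp])
  qed
  ultimately show "\<pi>' \<in> col_stab \<nu> (\<sigma> \<circ> T)" by (simp add: col_stab_def)
qed

lemma polytab_act: "perm_act \<sigma> (polytabloid \<nu> T) = polytabloid \<nu> (\<sigma> \<circ> T)"
proof
  fix t
  have bs: "bij \<sigma>" using permutes_bij[OF sp] .
  have ps: "permutation \<sigma>" using sp by (auto simp: permutation_permutes)
  have inj: "inj_on (\<lambda>\<pi>. \<sigma> \<circ> \<pi> \<circ> inv \<sigma>) (col_stab \<nu> T)"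
  proof (rule inj_onI)
    fix a b assume "\<sigma> \<circ> a \<circ> inv \<sigma> = \<sigma> \<circ> b \<circ> inv \<sigma>"
    then have "inv \<sigma> \<circ> (\<sigma> \<circ> a \<circ> inv \<sigma>) \<circ> \<sigma> = inv \<sigma> \<circ> (\<sigma> \<circ> b \<circ> inv \<sigma>) \<circ> \<sigma>" by simp
    moreover have "a = inv \<sigma> \<circ> (\<sigma> \<circ> a \<circ> inv \<sigma>) \<circ> \<sigma>" "b = inv \<sigma> \<circ> (\<sigma> \<circ> b \<circ> inv \<sigma>) \<circ> \<sigma>"
    proof -
      have "inv \<sigma> \<circ> (\<sigma> \<circ> a \<circ> inv \<sigma>) \<circ> \<sigma> = (inv \<sigma> \<circ> \<sigma>) \<circ> a \<circ> (inv \<sigma> \<circ> \<sigma>)" by (simp add: comp_assoc)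
      then show "a = inv \<sigma> \<circ> (\<sigma> \<circ> a \<circ> inv \<sigma>) \<circ> \<sigma>" using permutes_inv_o(2)[OF sp] by simp
      have "inv \<sigma> \<circ> (\<sigma> \<circ> b \<circ> inv \<sigma>) \<circ> \<sigma> = (inv \<sigma> \<circ> \<sigma>) \<circ> b \<circ> (inv \<sigma> \<circ> \<sigma>)" by (simp add: comp_assoc)
      then show "b = inv \<sigma> \<circ> (\<sigma> \<circ> b \<circ> inv \<sigma>) \<circ> \<sigma>" using permutes_inv_o(2)[OF sp] by simp
    qed
    ultimately show "a = b" by metis
  qed
  have "polytabloid \<nu> (\<sigma> \<circ> T) t = (\<Sum>\<pi>'\<in>(\<lambda>\<pi>. \<sigma> \<circ> \<pi> \<circ> inv \<sigma>) ` col_stab \<nu> T.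
      of_int (sign \<pi>') * (if tabloid_of \<nu> T \<circ> inv \<sigma> \<circ> inv \<pi>' = t then 1 else 0))"
    unfolding polytabloid_def col_stab_comp tabloid_comp ..
  also have "\<dots> = (\<Sum>\<pi>\<in>col_stab \<nu> T. of_int (sign (\<sigma> \<circ> \<pi> \<circ> inv \<sigma>)) *
      (if tabloid_of \<nu> T \<circ> inv \<sigma> \<circ> inv (\<sigma> \<circ> \<pi> \<circ> inv \<sigma>) = t then 1 else 0))"
    using sum.reindex[OF inj, of "\<lambda>\<pi>'. of_int (sign \<pi>') * (if tabloid_of \<nu> T \<circ> inv \<sigma> \<circ> inv \<pi>' = t then 1 else (0::complex))"]
    by (simp add: comp_def)
  also have "\<dots> = (\<Sum>\<pi>\<in>col_stab \<nu> T. of_int (sign \<pi>) * (if tabloid_of \<nu> T \<circ> inv \<pi> = t \<circ> \<sigma> then 1 else 0))"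
  proof (rule sum.cong[OF refl])
    fix \<pi> assume "\<pi> \<in> col_stab \<nu> T"
    then have pp: "\<pi> permutes {1..sum_list \<nu>}" by (simp add: col_stab_def)
    have ppi: "permutation \<pi>" using pp by (auto simp: permutation_permutes)
    have "sign (\<sigma> \<circ> \<pi> \<circ> inv \<sigma>) = sign \<sigma> * sign \<pi> * sign (inv \<sigma>)"
      by (simp add: sign_compose permutation_compose permutation_inverse ps ppi)
    also have "\<dots> = sign \<pi>" using sign_inverse[OF ps] by (simp add: mult.commute mult.left_commute)
    finally have s: "sign (\<sigma> \<circ> \<pi> \<circ> inv \<sigma>) = sign \<pi>" .
    have "tabloid_of \<nu> T \<circ> inv \<sigma> \<circ> inv (\<sigma> \<circ> \<pi> \<circ> inv \<sigma>) = tabloid_of \<nu> T \<circ> inv \<pi> \<circ> inv \<sigma>"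
    proof -
      have "tabloid_of \<nu> T \<circ> inv \<sigma> \<circ> inv (\<sigma> \<circ> \<pi> \<circ> inv \<sigma>) = tabloid_of \<nu> T \<circ> (inv \<sigma> \<circ> \<sigma>) \<circ> inv \<pi> \<circ> inv \<sigma>"
        unfolding inv_conj[OF permutes_bij[OF pp]] by (simp add: comp_assoc)
      then show ?thesis using permutes_inv_o(2)[OF sp] by simp
    qed
    moreover have "(tabloid_of \<nu> T \<circ> inv \<pi> \<circ> inv \<sigma> = t) = (tabloid_of \<nu> T \<circ> inv \<pi> = t \<circ> \<sigma>)"
    proof
      assume h: "tabloid_of \<nu> T \<circ> inv \<pi> \<circ> inv \<sigma> = t"
      have "t \<circ> \<sigma> = tabloid_of \<nu> T \<circ> inv \<pi> \<circ> (inv \<sigma> \<circ> \<sigma>)" unfolding h[symmetric] by (simp add: o_assoc)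
      then show "tabloid_of \<nu> T \<circ> inv \<pi> = t \<circ> \<sigma>" using permutes_inv_o(2)[OF sp] by simp
    next
      assume h: "tabloid_of \<nu> T \<circ> inv \<pi> = t \<circ> \<sigma>"
      have "tabloid_of \<nu> T \<circ> inv \<pi> \<circ> inv \<sigma> = t \<circ> (\<sigma> \<circ> inv \<sigma>)" unfolding h by (simp add: o_assoc)
      then show "tabloid_of \<nu> T \<circ> inv \<pi> \<circ> inv \<sigma> = t" using permutes_inv_o(1)[OF sp] by simp
    qed
    ultimately show "of_int (sign (\<sigma> \<circ> \<pi> \<circ> inv \<sigma>)) *
      (if tabloid_of \<nu> T \<circ> inv \<sigma> \<circ> inv (\<sigma> \<circ> \<pi> \<circ> inv \<sigma>) = t then 1 else 0) =
      of_int (sign \<pi>) * (if tabloid_of \<nu> T \<circ> inv \<pi> = t \<circ> \<sigma> then (1::complex) else 0)"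
      using s by simp
  qed
  also have "\<dots> = perm_act \<sigma> (polytabloid \<nu> T) t"
    by (simp add: perm_act_def polytabloid_def)
  finally show "perm_act \<sigma> (polytabloid \<nu> T) t = polytabloid \<nu> (\<sigma> \<circ> T) t" by simp
qed

lemma tableaux_comp: "T \<in> tableaux \<nu> \<Longrightarrow> \<sigma> \<circ> T \<in> tableaux \<nu>"
proof -
  assume T: "T \<in> tableaux \<nu>"
  have "bij_betw (\<sigma> \<circ> T) (young \<nu>) {1..sum_list \<nu>}"
    using bij_betw_trans[of T "young \<nu>" "{1..sum_list \<nu>}" \<sigma>] T permutes_imp_bij[OF sp]
    by (simp add: tableaux_def)
  moreover have "\<sigma> 0 = 0" using permutes_not_in[OF sp] by simp
  ultimately show ?thesis using T by (simp add: tableaux_def)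
qed

end

lemma finite_young: "finite (young \<nu>)"
proof -
  have "young \<nu> \<subseteq> {..<length \<nu>} \<times> {..<Suc (sum_list \<nu>)}"
  proof (auto simp: young_def)
    fix a b assume "a < length \<nu>" "b < \<nu> ! a"
    then show "b < Suc (sum_list \<nu>)" using elem_le_sum_list[of a \<nu>] by linarith
  qed
  then show ?thesis by (rule finite_subset) simp
qed

lemma finite_tableaux: "finite (tableaux \<nu>)"
proof -
  have "restrict_on_y ` tableaux \<nu> \<subseteq> PiE (young \<nu>) (\<lambda>_. {1..sum_list \<nu>})"
    if "restrict_on_y = (\<lambda>T. restrict T (young \<nu>))" for restrict_on_y :: "(nat \<times> nat \<Rightarrow> nat) \<Rightarrow> _"
    using that by (auto simp: tableaux_def bij_betw_def PiE_def Pi_def)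
  then have f: "finite ((\<lambda>T. restrict T (young \<nu>)) ` tableaux \<nu>)"
    by (rule finite_subset[OF _ finite_PiE[OF finite_young]]) auto
  have "inj_on (\<lambda>T. restrict T (young \<nu>)) (tableaux \<nu>)"
  proof (rule inj_onI)
    fix T T' assume "T \<in> tableaux \<nu>" "T' \<in> tableaux \<nu>" "restrict T (young \<nu>) = restrict T' (young \<nu>)"
    then show "T = T'" unfolding tableaux_def restrict_def fun_eq_iff by (metis (mono_tags, lifting) mem_Collect_eq)
  qed
  then show ?thesis using finite_imageD[OF f] by blast
qed

lemma specht_span: "specht \<nu> = span_of (tableaux \<nu>) (polytabloid \<nu>)"
  by (simp add: specht_def span_of_def)

lemma perm_act_specht:
  assumes sp: "\<sigma> permutes {1..sum_list \<nu>}" and u: "u \<in> specht \<nu>"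
  shows "perm_act \<sigma> u \<in> specht \<nu>"
proof -
  obtain c where u: "u = (\<lambda>t. \<Sum>T\<in>tableaux \<nu>. c T * polytabloid \<nu> T t)" using u by (auto simp: specht_def)
  have inj: "inj_on (\<lambda>T. \<sigma> \<circ> T) (tableaux \<nu>)"
  proof (rule inj_onI)
    fix a b assume "\<sigma> \<circ> a = \<sigma> \<circ> b"
    then have "inv \<sigma> \<circ> (\<sigma> \<circ> a) = inv \<sigma> \<circ> (\<sigma> \<circ> b)" by simp
    then show "a = b" using permutes_inv_o(2)[OF sp] by (simp add: comp_assoc[symmetric])
  qed
  have im: "(\<lambda>T. \<sigma> \<circ> T) ` tableaux \<nu> = tableaux \<nu>"
  proof
    show "(\<lambda>T. \<sigma> \<circ> T) ` tableaux \<nu> \<subseteq> tableaux \<nu>" using tableaux_comp[OF sp] by blast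
    show "tableaux \<nu> \<subseteq> (\<lambda>T. \<sigma> \<circ> T) ` tableaux \<nu>"
    proof
      fix T assume T: "T \<in> tableaux \<nu>"
      have "inv \<sigma> \<circ> T \<in> tableaux \<nu>" by (rule tableaux_comp[OF permutes_inv[OF sp] T])
      moreover have "T = \<sigma> \<circ> (inv \<sigma> \<circ> T)" using permutes_inv_o(1)[OF sp] by (simp add: o_assoc)
      ultimately show "T \<in> (\<lambda>T. \<sigma> \<circ> T) ` tableaux \<nu>" by blast
    qed
  qed
  have "perm_act \<sigma> u = (\<lambda>t. \<Sum>T\<in>tableaux \<nu>. c T * polytabloid \<nu> (\<sigma> \<circ> T) t)"
  proof
    fix t
    have "perm_act \<sigma> u t = (\<Sum>T\<in>tableaux \<nu>. c T * perm_act \<sigma> (polytabloid \<nu> T) t)"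
      by (simp add: u perm_act_def)
    then show "perm_act \<sigma> u t = (\<Sum>T\<in>tableaux \<nu>. c T * polytabloid \<nu> (\<sigma> \<circ> T) t)"
      by (simp add: polytab_act[OF sp])
  qed
  also have "\<dots> = (\<lambda>t. \<Sum>T\<in>tableaux \<nu>. c (inv \<sigma> \<circ> T) * polytabloid \<nu> T t)"
  proof
    fix t
    have "(\<Sum>T\<in>tableaux \<nu>. c (inv \<sigma> \<circ> T) * polytabloid \<nu> T t) =
          (\<Sum>T\<in>(\<lambda>T. \<sigma> \<circ> T) ` tableaux \<nu>. c (inv \<sigma> \<circ> T) * polytabloid \<nu> T t)" unfolding im ..
    also have "\<dots> = (\<Sum>T\<in>tableaux \<nu>. c (inv \<sigma> \<circ> (\<sigma> \<circ> T)) * polytabloid \<nu> (\<sigma> \<circ> T) t)"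
      using sum.reindex[OF inj, of "\<lambda>T. c (inv \<sigma> \<circ> T) * polytabloid \<nu> T t"] by (simp add: comp_def)
    also have "\<dots> = (\<Sum>T\<in>tableaux \<nu>. c T * polytabloid \<nu> (\<sigma> \<circ> T) t)"
    proof -
      have "\<And>T::nat \<times> nat \<Rightarrow> nat. inv \<sigma> \<circ> (\<sigma> \<circ> T) = T"
        by (metis comp_assoc permutes_inv_o(2)[OF sp] id_comp)
      then show ?thesis by simp
    qed
    finally show "(\<Sum>T\<in>tableaux \<nu>. c T * polytabloid \<nu> (\<sigma> \<circ> T) t) =
          (\<Sum>T\<in>tableaux \<nu>. c (inv \<sigma> \<circ> T) * polytabloid \<nu> T t)" by simp
  qed
  finally show ?thesis unfolding specht_def by (intro CollectI exI[of _ "\<lambda>T. c (inv \<sigma> \<circ> T)"]) simp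
qed

lemma perm_act_linmap:
  assumes sp: "\<sigma> permutes {1..sum_list \<nu>}"
  shows "linmap_on (specht \<nu>) (perm_act \<sigma>)"
  unfolding linmap_on_def using perm_act_specht[OF sp] by (auto simp: perm_act_def)

lemma perm_act_sum: "perm_act \<sigma> (\<lambda>x. \<Sum>j\<in>J. c j * v j x) = (\<lambda>x. \<Sum>j\<in>J. c j * perm_act \<sigma> (v j) x)"
  by (simp add: perm_act_def)

lemma specht_subsp: "subsp (specht \<nu>)"
proof -
  obtain bs r where "frame (span_of (tableaux \<nu>) (polytabloid \<nu>)) {..<r} bs (\<lambda>i u. coord bs r u i)"
    using span_of_frame[OF finite_tableaux] by blast
  then show ?thesis by (simp add: frame_def specht_span)
qed

theorem chi_S_conj:
  assumes tp: "\<tau> permutes {1..sum_list \<nu>}" and gp: "\<gamma> permutes {1..sum_list \<nu>}"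
  shows "chi_S \<nu> (\<tau> \<circ> \<gamma> \<circ> inv \<tau>) = chi_S \<nu> \<gamma>"
proof -
  obtain bs r where F: "frame (specht \<nu>) {..<r} bs (\<lambda>i u. coord bs r u i)"
    using span_of_frame[OF finite_tableaux] specht_span by metis
  define q where "q = (\<lambda>i u. coord bs r u i)"
  have F: "frame (specht \<nu>) {..<r} bs q" using F by (simp add: q_def)
  have itp: "inv \<tau> permutes {1..sum_list \<nu>}" by (rule permutes_inv[OF tp])
  have sg: "\<tau> \<circ> \<gamma> \<circ> inv \<tau> permutes {1..sum_list \<nu>}"
    by (intro permutes_compose[OF itp] permutes_compose[OF gp tp])
  define b' where "b' = (\<lambda>i. perm_act \<tau> (bs i))"
  define q' where "q' = (\<lambda>i u. q i (perm_act (inv \<tau>) u))"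
  have U: "subsp (specht \<nu>)" and bU: "\<forall>i\<in>{..<r}. bs i \<in> specht \<nu>"
    and ex: "\<forall>u\<in>specht \<nu>. u = (\<lambda>x. \<Sum>i\<in>{..<r}. q i u * bs i x)"
    and dl: "\<forall>i\<in>{..<r}. \<forall>j\<in>{..<r}. q i (bs j) = (if i = j then 1 else 0)"
    and lq: "\<forall>i\<in>{..<r}. linfun_on (specht \<nu>) (q i)"
    using F unfolding frame_def by auto
  have c1: "perm_act (inv \<tau>) (perm_act \<tau> f) = f" for f
    using permutes_inv_o(2)[OF tp] by (simp add: perm_act_comp perm_act_id)
  have c2: "perm_act \<tau> (perm_act (inv \<tau>) f) = f" for f
    using permutes_inv_o(1)[OF tp] by (simp add: perm_act_comp perm_act_id)
  have F': "frame (specht \<nu>) {..<r} b' q'"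
    unfolding frame_def
  proof (intro conjI ballI)
    show "subsp (specht \<nu>)" by fact
    show "finite {..<r}" by simp
    show "b' i \<in> specht \<nu>" if "i \<in> {..<r}" for i
      using perm_act_specht[OF tp] bU that by (simp add: b'_def)
    show "u = (\<lambda>x. \<Sum>i\<in>{..<r}. q' i u * b' i x)" if u: "u \<in> specht \<nu>" for u
    proof -
      have "perm_act (inv \<tau>) u \<in> specht \<nu>" using perm_act_specht[OF itp u] .
      then have "perm_act (inv \<tau>) u = (\<lambda>x. \<Sum>i\<in>{..<r}. q' i u * bs i x)" using ex by (simp add: q'_def)
      then have "perm_act \<tau> (perm_act (inv \<tau>) u) = perm_act \<tau> (\<lambda>x. \<Sum>i\<in>{..<r}. q' i u * bs i x)" by simp
      then show ?thesis unfolding c2 perm_act_sum b'_def .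
    qed
    show "q' i (b' j) = (if i = j then 1 else 0)" if "i \<in> {..<r}" "j \<in> {..<r}" for i j
      using dl that by (simp add: q'_def b'_def c1)
    show "linfun_on (specht \<nu>) (q' i)" if i: "i \<in> {..<r}" for i
      unfolding linfun_on_def
    proof (intro ballI allI)
      fix u v a b assume u: "u \<in> specht \<nu>" and v: "v \<in> specht \<nu>"
      have "perm_act (inv \<tau>) (\<lambda>x. a * u x + b * v x) = (\<lambda>x. a * perm_act (inv \<tau>) u x + b * perm_act (inv \<tau>) v x)"
        by (simp add: perm_act_def)
      then show "q' i (\<lambda>x. a * u x + b * v x) = a * q' i u + b * q' i v"
        using linfunD[OF lq[rule_format, OF i] perm_act_specht[OF itp u] perm_act_specht[OF itp v]]
        by (simp add: q'_def)
    qed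
  qed
  have "chi_S \<nu> (\<tau> \<circ> \<gamma> \<circ> inv \<tau>) = (\<Sum>i\<in>{..<r}. q' i (perm_act (\<tau> \<circ> \<gamma> \<circ> inv \<tau>) (b' i)))"
    unfolding chi_S_def by (rule trace_on_frame[OF F' perm_act_linmap[OF sg]])
  also have "\<dots> = (\<Sum>i\<in>{..<r}. q i (perm_act \<gamma> (bs i)))"
  proof (rule sum.cong[OF refl])
    fix i
    have "perm_act (inv \<tau>) (perm_act (\<tau> \<circ> \<gamma> \<circ> inv \<tau>) (perm_act \<tau> (bs i))) =
          perm_act (inv \<tau> \<circ> \<tau> \<circ> \<gamma> \<circ> (inv \<tau> \<circ> \<tau>)) (bs i)" by (simp add: perm_act_comp o_assoc)
    also have "\<dots> = perm_act \<gamma> (bs i)" using permutes_inv_o(2)[OF tp] by simp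
    finally show "q' i (perm_act (\<tau> \<circ> \<gamma> \<circ> inv \<tau>) (b' i)) = q i (perm_act \<gamma> (bs i))"
      by (simp add: q'_def b'_def)
  qed
  also have "\<dots> = chi_S \<nu> \<gamma>"
    unfolding chi_S_def by (rule trace_on_frame[OF F perm_act_linmap[OF gp], symmetric])
  finally show ?thesis .
qed


section \<open>Components of a relation\<close>

lemma closed_rtrancl:
  assumes dis: "\<forall>C\<in>P. \<forall>C'\<in>P. C \<noteq> C' \<longrightarrow> C \<inter> C' = {}"
    and step: "\<forall>x y. (x, y) \<in> R \<longrightarrow> (\<exists>C\<in>P. x \<in> C \<and> y \<in> C)"
    and xy: "(x, y) \<in> R\<^sup>*" and C: "C \<in> P" "x \<in> C"
  shows "y \<in> C"
  using xy
proof (induction rule: rtrancl_induct)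
  case base then show ?case using C by simp
next
  case (step y z)
  obtain C' where C': "C' \<in> P" "y \<in> C'" "z \<in> C'" using assms(2) step.hyps(2) by blast
  have "C' = C"
  proof (rule ccontr)
    assume "C' \<noteq> C"
    then have "C' \<inter> C = {}" using dis C'(1) C(1) by blast
    then show False using C'(2) step.IH by blast
  qed
  then show ?case using C'(3) by simp
qed

lemma comps_char:
  assumes dis: "\<forall>C\<in>P. \<forall>C'\<in>P. C \<noteq> C' \<longrightarrow> C \<inter> C' = {}"
    and dom: "\<Union>P = Domain R"
    and ne: "{} \<notin> P"
    and step: "\<forall>x y. (x, y) \<in> R \<longrightarrow> (\<exists>C\<in>P. x \<in> C \<and> y \<in> C)"
    and conn: "\<forall>C\<in>P. \<forall>x\<in>C. \<forall>y\<in>C. (x, y) \<in> R\<^sup>+"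
  shows "{R\<^sup>+ `` {x} | x. x \<in> Domain R} = P"
proof -
  have key: "R\<^sup>+ `` {x} = C" if "C \<in> P" "x \<in> C" for x C
  proof
    show "R\<^sup>+ `` {x} \<subseteq> C"
    proof
      fix y assume "y \<in> R\<^sup>+ `` {x}"
      then have "(x, y) \<in> R\<^sup>*" by (simp add: trancl_into_rtrancl)
      then show "y \<in> C" by (rule closed_rtrancl[OF dis step _ that])
    qed
    show "C \<subseteq> R\<^sup>+ `` {x}"
    proof
      fix y assume "y \<in> C"
      then have "(x, y) \<in> R\<^sup>+" using conn that by blast
      then show "y \<in> R\<^sup>+ `` {x}" by simp
    qed
  qed
  show ?thesis
  proof (intro set_eqI iffI)
    fix C assume "C \<in> {R\<^sup>+ `` {x} | x. x \<in> Domain R}"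
    then obtain x where x: "x \<in> Domain R" "C = R\<^sup>+ `` {x}" by blast
    then obtain C' where C': "C' \<in> P" "x \<in> C'" using dom by (metis UnionE)
    then show "C \<in> P" using key[OF C'] x by simp
  next
    fix C assume C: "C \<in> P"
    then obtain x where x: "x \<in> C" using ne by (metis all_not_in_conv)
    then have "x \<in> Domain R" using C dom by (metis UnionI)
    moreover have "C = R\<^sup>+ `` {x}" using key[OF C x] by simp
    ultimately show "C \<in> {R\<^sup>+ `` {x} | x. x \<in> Domain R}" by blast
  qed
qed

definition brel :: "nat \<Rightarrow> diagram \<Rightarrow> ((nat \<times> nat) \<times> (nat \<times> nat)) set" where
  "brel l D = {(x, y). \<exists>B\<in>D. x \<in> lift l ` B \<and> y \<in> lift l ` B}"

lemma stack_rel_alt: "stack_rel ds = (\<Union>l<length ds. brel l (ds ! l))"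
  by (auto simp: stack_rel_def brel_def)

lemma stack_rel2: "stack_rel [a, b] = brel 0 a \<union> brel 1 b"
  unfolding stack_rel_alt by (simp add: lessThan_Suc Un_ac)

lemma stack_rel3: "stack_rel [a, b, c] = brel 0 a \<union> brel 1 b \<union> brel 2 c"
  unfolding stack_rel_alt by (simp add: lessThan_Suc Un_ac numeral_2_eq_2)

lemma lift_simps: "lift l (i, False) = (i, l)" "lift l (i, True) = (i, Suc l)"
  by (simp_all add: lift_def)

lemma lift_inj: "lift l u = lift l v \<longleftrightarrow> u = v"
  by (cases u; cases v) (auto simp: lift_def split: if_splits)

lemma perm_diagram_img: "perm_diagram k \<sigma> = (\<lambda>j. {(\<sigma> j, False), (j, True)}) ` {1..k}"
  by (auto simp: perm_diagram_def)

lemma transp_perm: "transp (perm_diagram k \<sigma>) = (\<lambda>j. {(\<sigma> j, True), (j, False)}) ` {1..k}"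
  unfolding transp_def perm_diagram_img image_image by simp

lemma brel_perm_D: "(x, y) \<in> brel l (perm_diagram k \<sigma>) \<Longrightarrow>
   \<exists>j\<in>{1..k}. x \<in> {(\<sigma> j, l), (j, Suc l)} \<and> y \<in> {(\<sigma> j, l), (j, Suc l)}"
proof -
  assume "(x, y) \<in> brel l (perm_diagram k \<sigma>)"
  then obtain B where B: "B \<in> perm_diagram k \<sigma>" "x \<in> lift l ` B" "y \<in> lift l ` B"
    unfolding brel_def by blast
  then obtain j where j: "j \<in> {1..k}" "B = {(\<sigma> j, False), (j, True)}" unfolding perm_diagram_img by blast
  have e: "lift l ` B = {(\<sigma> j, l), (j, Suc l)}" using j(2) by (simp add: lift_simps)
  show ?thesis using j(1) B(2,3) unfolding e by (intro bexI[of _ j]) auto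
qed

lemma brel_tperm_D: "(x, y) \<in> brel l (transp (perm_diagram k \<sigma>)) \<Longrightarrow>
   \<exists>j\<in>{1..k}. x \<in> {(j, l), (\<sigma> j, Suc l)} \<and> y \<in> {(j, l), (\<sigma> j, Suc l)}"
proof -
  assume "(x, y) \<in> brel l (transp (perm_diagram k \<sigma>))"
  then obtain B where B: "B \<in> transp (perm_diagram k \<sigma>)" "x \<in> lift l ` B" "y \<in> lift l ` B"
    unfolding brel_def by blast
  then obtain j where j: "j \<in> {1..k}" "B = {(\<sigma> j, True), (j, False)}" unfolding transp_perm by blast
  have e: "lift l ` B = {(j, l), (\<sigma> j, Suc l)}" using j(2) by (auto simp: lift_simps)
  show ?thesis using j(1) B(2,3) unfolding e by (intro bexI[of _ j]) auto
qed

lemma brel_perm_I: "j \<in> {1..k} \<Longrightarrow> x \<in> {(\<sigma> j, l), (j, Suc l)} \<Longrightarrow> y \<in> {(\<sigma> j, l), (j, Suc l)} \<Longrightarrow>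
   (x, y) \<in> brel l (perm_diagram k \<sigma>)"
proof -
  assume j: "j \<in> {1..k}" and x: "x \<in> {(\<sigma> j, l), (j, Suc l)}" and y: "y \<in> {(\<sigma> j, l), (j, Suc l)}"
  have B: "{(\<sigma> j, False), (j, True)} \<in> perm_diagram k \<sigma>" using j by (simp add: perm_diagram_img)
  have e: "lift l ` {(\<sigma> j, False), (j, True)} = {(\<sigma> j, l), (j, Suc l)}" by (simp add: lift_simps)
  have "x \<in> lift l ` {(\<sigma> j, False), (j, True)}" "y \<in> lift l ` {(\<sigma> j, False), (j, True)}"
    using x y unfolding e by auto
  then show ?thesis unfolding brel_def mem_Collect_eq case_prod_conv using B by blast
qed

lemma brel_tperm_I: "j \<in> {1..k} \<Longrightarrow> x \<in> {(j, l), (\<sigma> j, Suc l)} \<Longrightarrow> y \<in> {(j, l), (\<sigma> j, Suc l)} \<Longrightarrow>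
   (x, y) \<in> brel l (transp (perm_diagram k \<sigma>))"
proof -
  assume j: "j \<in> {1..k}" and x: "x \<in> {(j, l), (\<sigma> j, Suc l)}" and y: "y \<in> {(j, l), (\<sigma> j, Suc l)}"
  have B: "{(\<sigma> j, True), (j, False)} \<in> transp (perm_diagram k \<sigma>)" using j by (simp add: transp_perm)
  have e: "lift l ` {(\<sigma> j, True), (j, False)} = {(j, l), (\<sigma> j, Suc l)}" by (auto simp: lift_simps)
  have "x \<in> lift l ` {(\<sigma> j, True), (j, False)}" "y \<in> lift l ` {(\<sigma> j, True), (j, False)}"
    using x y unfolding e by auto
  then show ?thesis unfolding brel_def mem_Collect_eq case_prod_conv using B by blast
qed

lemma brel_refl: "B \<in> D \<Longrightarrow> v \<in> B \<Longrightarrow> (lift l v, lift l v) \<in> brel l D"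
  by (auto simp: brel_def)

lemma brel_pair: "B \<in> D \<Longrightarrow> u \<in> B \<Longrightarrow> v \<in> B \<Longrightarrow> (lift l u, lift l v) \<in> brel l D"
  by (auto simp: brel_def)

lemma verts_iff: "(i, b) \<in> verts k \<longleftrightarrow> i \<in> {1..k}"
  by (simp add: verts_def)

lemma part_block: "partition_on (verts k) w \<Longrightarrow> i \<in> {1..k} \<Longrightarrow> \<exists>B\<in>w. (i, b) \<in> B"
  using partition_onD1[of "verts k" w] verts_iff[of i b k] by blast

lemma part_sub: "partition_on (verts k) w \<Longrightarrow> B \<in> w \<Longrightarrow> (i, b) \<in> B \<Longrightarrow> i \<in> {1..k}"
  using partition_onD1[of "verts k" w] verts_iff[of i b k] by blast

lemma part_disj: "partition_on A w \<Longrightarrow> B \<in> w \<Longrightarrow> B' \<in> w \<Longrightarrow> x \<in> B \<Longrightarrow> x \<in> B' \<Longrightarrow> B = B'"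
  using partition_onD2[of A w] by (auto simp: disjoint_def)

lemma part_ne: "partition_on A w \<Longrightarrow> B \<in> w \<Longrightarrow> B \<noteq> {}"
  using partition_onD3[of A w] by auto

definition comp_sys :: "('a \<times> 'a) set \<Rightarrow> 'a set set \<Rightarrow> bool" where
  "comp_sys R P \<longleftrightarrow> (\<forall>C\<in>P. \<forall>C'\<in>P. C \<noteq> C' \<longrightarrow> C \<inter> C' = {}) \<and> \<Union>P = Domain R \<and> {} \<notin> P \<and>
     (\<forall>x y. (x, y) \<in> R \<longrightarrow> (\<exists>C\<in>P. x \<in> C \<and> y \<in> C)) \<and> (\<forall>C\<in>P. \<forall>x\<in>C. \<forall>y\<in>C. (x, y) \<in> R\<^sup>+)"

lemma comp_sys_comps: "comp_sys (stack_rel ds) P \<Longrightarrow> comps ds = P"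
  unfolding comps_def comp_sys_def by (intro comps_char) auto

lemma comp_sys_closed: "comp_sys R P \<Longrightarrow> (x, y) \<in> R\<^sup>* \<Longrightarrow> C \<in> P \<Longrightarrow> x \<in> C \<Longrightarrow> y \<in> C"
  unfolding comp_sys_def by (intro closed_rtrancl[of P R x y C]) auto

lemma comp_sysI:
  fixes Cf :: "'b \<Rightarrow> 'a set" and A :: "'b \<Rightarrow> 'a set"
  assumes dis: "\<And>B B' z. B \<in> W \<Longrightarrow> B' \<in> W \<Longrightarrow> z \<in> Cf B \<Longrightarrow> z \<in> Cf B' \<Longrightarrow> B = B'"
    and dom1: "\<And>B z. B \<in> W \<Longrightarrow> z \<in> Cf B \<Longrightarrow> (z, z) \<in> R"
    and step: "\<And>x y. (x, y) \<in> R \<Longrightarrow> \<exists>B\<in>W. x \<in> Cf B \<and> y \<in> Cf B"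
    and anc_sub: "\<And>B. B \<in> W \<Longrightarrow> A B \<subseteq> Cf B"
    and anc_ne: "\<And>B. B \<in> W \<Longrightarrow> A B \<noteq> {}"
    and anc_conn: "\<And>B x y. B \<in> W \<Longrightarrow> x \<in> A B \<Longrightarrow> y \<in> A B \<Longrightarrow> (x, y) \<in> R"
    and anc: "\<And>B z. B \<in> W \<Longrightarrow> z \<in> Cf B \<Longrightarrow> \<exists>a\<in>A B. (z, a) \<in> R \<and> (a, z) \<in> R"
  shows "comp_sys R (Cf ` W)"
  unfolding comp_sys_def
proof (intro conjI ballI allI impI)
  fix C C' assume "C \<in> Cf ` W" "C' \<in> Cf ` W" "C \<noteq> C'"
  then obtain B B' where "B \<in> W" "B' \<in> W" "C = Cf B" "C' = Cf B'" by blast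
  then show "C \<inter> C' = {}" using dis \<open>C \<noteq> C'\<close> by blast
next
  show "\<Union>(Cf ` W) = Domain R"
  proof
    show "\<Union>(Cf ` W) \<subseteq> Domain R" using dom1 by blast
    show "Domain R \<subseteq> \<Union>(Cf ` W)"
    proof
      fix x assume "x \<in> Domain R"
      then obtain y where "(x, y) \<in> R" by blast
      then obtain B where "B \<in> W" "x \<in> Cf B" using step by blast
      then show "x \<in> \<Union>(Cf ` W)" by blast
    qed
  qed
next
  show "{} \<notin> Cf ` W" using anc_sub anc_ne by blast
next
  fix x y assume "(x, y) \<in> R"
  then obtain B where "B \<in> W" "x \<in> Cf B" "y \<in> Cf B" using step by blast
  then show "\<exists>C\<in>Cf ` W. x \<in> C \<and> y \<in> C" by blast
next
  fix C x y assume C: "C \<in> Cf ` W" and x: "x \<in> C" and y: "y \<in> C"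
  then obtain B where B: "B \<in> W" "C = Cf B" by blast
  obtain a where a: "a \<in> A B" "(x, a) \<in> R" using anc[OF B(1)] x B(2) by blast
  obtain a' where a': "a' \<in> A B" "(a', y) \<in> R" using anc[OF B(1)] y B(2) by blast
  have "(a, a') \<in> R" using anc_conn[OF B(1) a(1) a'(1)] .
  then show "(x, y) \<in> R\<^sup>+" using a(2) a'(2) by (meson trancl.simps r_into_trancl trancl_trans)
qed

section \<open>Composition with a permutation diagram on top\<close>

definition cmp1 :: "(nat \<Rightarrow> nat) \<Rightarrow> vtx set \<Rightarrow> (nat \<times> nat) set" where
  "cmp1 \<sigma> B = lift 1 ` B \<union> (\<lambda>i. (\<sigma> i, 0)) ` {i. (i, False) \<in> B}"

lemma lift_level: "snd (lift l v) \<ge> l"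
  by (simp add: lift_def)

lemma comp_sys_top:
  assumes sp: "\<sigma> permutes {1..k}" and w: "partition_on (verts k) w"
  shows "comp_sys (stack_rel [perm_diagram k \<sigma>, w]) (cmp1 \<sigma> ` w)"
proof (rule comp_sysI[where A = "\<lambda>B. lift 1 ` B"])
  let ?R = "stack_rel [perm_diagram k \<sigma>, w]"
  have R: "?R = brel 0 (perm_diagram k \<sigma>) \<union> brel 1 w" by (rule stack_rel2)
  show "B = B'" if B: "B \<in> w" "B' \<in> w" "z \<in> cmp1 \<sigma> B" "z \<in> cmp1 \<sigma> B'" for B B' z
  proof -
    consider (a) u u' where "u \<in> B" "u' \<in> B'" "z = lift 1 u" "z = lift 1 u'"
      | (b) u i' where "u \<in> B" "(i', False) \<in> B'" "z = lift 1 u" "z = (\<sigma> i', 0)"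
      | (c) i u' where "(i, False) \<in> B" "u' \<in> B'" "z = (\<sigma> i, 0)" "z = lift 1 u'"
      | (d) i i' where "(i, False) \<in> B" "(i', False) \<in> B'" "z = (\<sigma> i, 0)" "z = (\<sigma> i', 0)"
      using B(3,4) unfolding cmp1_def by blast
    then show ?thesis
    proof cases
      case a then have "u = u'" using lift_inj by metis
      then show ?thesis using a part_disj[OF w B(1,2)] by blast
    next
      case b then have "snd (lift 1 u) = 0" by (metis snd_conv)
      with lift_level[of 1 u] show ?thesis by simp
    next
      case c then have "snd (lift 1 u') = 0" by (metis snd_conv)
      with lift_level[of 1 u'] show ?thesis by simp
    next
      case d then have "i = i'" using permutes_inj[OF sp] by (auto dest: injD)
      then show ?thesis using d part_disj[OF w B(1,2)] by blast
    qed
  qed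
  show "(z, z) \<in> ?R" if B: "B \<in> w" "z \<in> cmp1 \<sigma> B" for B z
  proof -
    consider (a) u where "u \<in> B" "z = lift 1 u" | (b) i where "(i, False) \<in> B" "z = (\<sigma> i, 0)"
      using B(2) unfolding cmp1_def by blast
    then show ?thesis
    proof cases
      case a then show ?thesis unfolding R using brel_refl[OF B(1)] by blast
    next
      case b
      then have "i \<in> {1..k}" using part_sub[OF w B(1)] by blast
      then have "(z, z) \<in> brel 0 (perm_diagram k \<sigma>)" using brel_perm_I[of i k z \<sigma> 0 z] b(2) by simp
      then show ?thesis unfolding R by (rule UnI1)
    qed
  qed
  show "\<exists>B\<in>w. x \<in> cmp1 \<sigma> B \<and> y \<in> cmp1 \<sigma> B" if "(x, y) \<in> ?R" for x y
  proof -
    have "(x, y) \<in> brel 0 (perm_diagram k \<sigma>) \<union> brel 1 w" using that R by simp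
    then show ?thesis
    proof (rule UnE)
      assume 1: "(x, y) \<in> brel 0 (perm_diagram k \<sigma>)"
      from 1 obtain j where j: "j \<in> {1..k}" "x \<in> {(\<sigma> j, 0), (j, Suc 0)}" "y \<in> {(\<sigma> j, 0), (j, Suc 0)}"
        using brel_perm_D[OF 1] by blast
      obtain B where B: "B \<in> w" "(j, False) \<in> B" using part_block[OF w j(1)] by blast
      have "(\<sigma> j, 0) \<in> cmp1 \<sigma> B" "(j, Suc 0) \<in> cmp1 \<sigma> B"
        using B(2) unfolding cmp1_def by (force simp: lift_simps)+
      then show ?thesis using j B(1) by blast
    next
      assume 2: "(x, y) \<in> brel 1 w"
      then obtain B where "B \<in> w" "x \<in> lift 1 ` B" "y \<in> lift 1 ` B" unfolding brel_def by blast
      then show ?thesis unfolding cmp1_def by blast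
    qed
  qed
  show "lift 1 ` B \<subseteq> cmp1 \<sigma> B" for B unfolding cmp1_def by blast
  show "lift 1 ` B \<noteq> {}" if "B \<in> w" for B using part_ne[OF w that] by blast
  show "(x, y) \<in> ?R" if "B \<in> w" "x \<in> lift 1 ` B" "y \<in> lift 1 ` B" for B x y
    unfolding R using that unfolding brel_def by blast
  show "\<exists>a\<in>lift 1 ` B. (z, a) \<in> ?R \<and> (a, z) \<in> ?R" if B: "B \<in> w" "z \<in> cmp1 \<sigma> B" for B z
  proof -
    consider (a) u where "u \<in> B" "z = lift 1 u" | (b) i where "(i, False) \<in> B" "z = (\<sigma> i, 0)"
      using B(2) unfolding cmp1_def by blast
    then show ?thesis
    proof cases
      case a
      then show ?thesis unfolding R using brel_refl[OF B(1)] by blast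
    next
      case b
      then have i: "i \<in> {1..k}" using part_sub[OF w B(1)] by blast
      have "(z, (i, Suc 0)) \<in> brel 0 (perm_diagram k \<sigma>)" "((i, Suc 0), z) \<in> brel 0 (perm_diagram k \<sigma>)"
        using brel_perm_I[OF i] b by auto
      moreover have "(i, Suc 0) \<in> lift 1 ` B" using b(1) by (force simp: lift_simps)
      ultimately show ?thesis unfolding R by blast
    qed
  qed
qed

lemma stack_eq:
  assumes c: "comps ds = Cf ` W" and ne: "\<forall>B\<in>W. Cf B \<inter> outer (length ds) \<noteq> {}"
    and g: "\<forall>B\<in>W. unembed (length ds) ` (Cf B \<inter> outer (length ds)) = G B"
  shows "stack ds = G ` W" "ell ds = 0"
proof -
  show "stack ds = G ` W"
    unfolding stack_def c using ne g by blast
  have e: "{C \<in> comps ds. C \<inter> outer (length ds) = {}} = {}" unfolding c using ne by blast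
  show "ell ds = 0" unfolding ell_def e by simp
qed

definition ft :: "(nat \<Rightarrow> nat) \<Rightarrow> vtx \<Rightarrow> vtx" where
  "ft \<sigma> v = (if snd v then v else (\<sigma> (fst v), False))"

definition fb :: "(nat \<Rightarrow> nat) \<Rightarrow> vtx \<Rightarrow> vtx" where
  "fb \<sigma> v = (if snd v then (\<sigma> (fst v), True) else v)"

definition fphi :: "(nat \<Rightarrow> nat) \<Rightarrow> vtx \<Rightarrow> vtx" where
  "fphi \<sigma> v = (\<sigma> (fst v), snd v)"

lemma outer_iff: "p \<in> outer L \<longleftrightarrow> snd p = 0 \<or> snd p = L"
  by (simp add: outer_def)

lemma unembed_top: "unembed 2 ` (cmp1 \<sigma> B \<inter> outer 2) = ft \<sigma> ` B"
proof (intro set_eqI iffI)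
  fix v assume "v \<in> unembed 2 ` (cmp1 \<sigma> B \<inter> outer 2)"
  then obtain z where z: "z \<in> cmp1 \<sigma> B" "z \<in> outer 2" "v = unembed 2 z" by blast
  from z(1) consider (a) u where "u \<in> B" "z = lift 1 u" | (b) i where "(i, False) \<in> B" "z = (\<sigma> i, 0)"
    unfolding cmp1_def by blast
  then show "v \<in> ft \<sigma> ` B"
  proof cases
    case a
    obtain i b where u: "u = (i, b)" by fastforce
    show ?thesis
    proof (cases b)
      case True
      then have "v = (i, True)" using a u z(3) by (simp add: lift_simps unembed_def)
      then show ?thesis using a(1) u True by (force simp: ft_def)
    next
      case False
      then show ?thesis using a u z(2) by (simp add: lift_simps outer_iff)
    qed
  next
    case b
    then have "v = (\<sigma> i, False)" using z(3) by (simp add: unembed_def)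
    then show ?thesis using b(1) by (force simp: ft_def)
  qed
next
  fix v assume "v \<in> ft \<sigma> ` B"
  then obtain u where u: "u \<in> B" "v = ft \<sigma> u" by blast
  obtain i b where ib: "u = (i, b)" by fastforce
  show "v \<in> unembed 2 ` (cmp1 \<sigma> B \<inter> outer 2)"
  proof (cases b)
    case True
    have "(i, 2) \<in> cmp1 \<sigma> B" using u ib True unfolding cmp1_def by (force simp: lift_simps numeral_2_eq_2)
    moreover have "(i, 2) \<in> outer 2" by (simp add: outer_iff)
    moreover have "v = unembed 2 (i, 2)" using u ib True by (simp add: ft_def unembed_def)
    ultimately show ?thesis by blast
  next
    case False
    have "(\<sigma> i, 0) \<in> cmp1 \<sigma> B" using u ib False unfolding cmp1_def by force
    moreover have "(\<sigma> i, 0) \<in> outer 2" by (simp add: outer_iff)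
    moreover have "v = unembed 2 (\<sigma> i, 0)" using u ib False by (simp add: ft_def unembed_def)
    ultimately show ?thesis by blast
  qed
qed

lemma stack_top:
  assumes sp: "\<sigma> permutes {1..k}" and w: "partition_on (verts k) w"
  shows "perm_diagram k \<sigma> \<circ>\<^sub>d w = (\<lambda>B. ft \<sigma> ` B) ` w" "ell [perm_diagram k \<sigma>, w] = 0"
proof -
  have c: "comps [perm_diagram k \<sigma>, w] = cmp1 \<sigma> ` w" by (rule comp_sys_comps[OF comp_sys_top[OF sp w]])
  have ne: "\<forall>B\<in>w. cmp1 \<sigma> B \<inter> outer (length [perm_diagram k \<sigma>, w]) \<noteq> {}"
  proof
    fix B assume "B \<in> w"
    then have "ft \<sigma> ` B \<noteq> {}" using part_ne[OF w] by blast
    then show "cmp1 \<sigma> B \<inter> outer (length [perm_diagram k \<sigma>, w]) \<noteq> {}"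
      using unembed_top[of \<sigma> B] by (auto simp: numeral_2_eq_2)
  qed
  have g: "\<forall>B\<in>w. unembed (length [perm_diagram k \<sigma>, w]) ` (cmp1 \<sigma> B \<inter> outer (length [perm_diagram k \<sigma>, w])) = ft \<sigma> ` B"
    using unembed_top[of \<sigma>] by (simp add: numeral_2_eq_2)
  show "perm_diagram k \<sigma> \<circ>\<^sub>d w = (\<lambda>B. ft \<sigma> ` B) ` w" "ell [perm_diagram k \<sigma>, w] = 0"
    using stack_eq[OF c ne g] by (simp_all add: comp_def)
qed

lemma lift_level_le: "snd (lift l v) \<le> Suc l"
  by (simp add: lift_def)

definition cmp2 :: "(nat \<Rightarrow> nat) \<Rightarrow> vtx set \<Rightarrow> (nat \<times> nat) set" where
  "cmp2 \<sigma> B = lift 0 ` B \<union> (\<lambda>i. (\<sigma> i, 2)) ` {i. (i, True) \<in> B}"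

lemma comp_sys_bot:
  assumes sp: "\<sigma> permutes {1..k}" and w: "partition_on (verts k) w"
  shows "comp_sys (stack_rel [w, transp (perm_diagram k \<sigma>)]) (cmp2 \<sigma> ` w)"
proof (rule comp_sysI[where A = "\<lambda>B. lift 0 ` B"])
  let ?R = "stack_rel [w, transp (perm_diagram k \<sigma>)]"
  have R: "?R = brel 0 w \<union> brel 1 (transp (perm_diagram k \<sigma>))" by (rule stack_rel2)
  show "B = B'" if B: "B \<in> w" "B' \<in> w" "z \<in> cmp2 \<sigma> B" "z \<in> cmp2 \<sigma> B'" for B B' z
  proof -
    consider (a) u u' where "u \<in> B" "u' \<in> B'" "z = lift 0 u" "z = lift 0 u'"
      | (b) u i' where "u \<in> B" "(i', True) \<in> B'" "z = lift 0 u" "z = (\<sigma> i', 2)"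
      | (c) i u' where "(i, True) \<in> B" "u' \<in> B'" "z = (\<sigma> i, 2)" "z = lift 0 u'"
      | (d) i i' where "(i, True) \<in> B" "(i', True) \<in> B'" "z = (\<sigma> i, 2)" "z = (\<sigma> i', 2)"
      using B(3,4) unfolding cmp2_def by blast
    then show ?thesis
    proof cases
      case a then have "u = u'" using lift_inj by metis
      then show ?thesis using a part_disj[OF w B(1,2)] by blast
    next
      case b then have "snd (lift 0 u) = 2" by (metis snd_conv)
      with lift_level_le[of 0 u] show ?thesis by simp
    next
      case c then have "snd (lift 0 u') = 2" by (metis snd_conv)
      with lift_level_le[of 0 u'] show ?thesis by simp
    next
      case d then have "i = i'" using permutes_inj[OF sp] by (auto dest: injD)
      then show ?thesis using d part_disj[OF w B(1,2)] by blast
    qed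
  qed
  show "(z, z) \<in> ?R" if B: "B \<in> w" "z \<in> cmp2 \<sigma> B" for B z
  proof -
    consider (a) u where "u \<in> B" "z = lift 0 u" | (b) i where "(i, True) \<in> B" "z = (\<sigma> i, 2)"
      using B(2) unfolding cmp2_def by blast
    then show ?thesis
    proof cases
      case a then show ?thesis unfolding R using brel_refl[OF B(1)] by blast
    next
      case b
      then have "i \<in> {1..k}" using part_sub[OF w B(1)] by blast
      then have "(z, z) \<in> brel 1 (transp (perm_diagram k \<sigma>))"
        using brel_tperm_I[of i k z 1 \<sigma> z] b(2) by (simp add: numeral_2_eq_2)
      then show ?thesis unfolding R by (rule UnI2)
    qed
  qed
  show "\<exists>B\<in>w. x \<in> cmp2 \<sigma> B \<and> y \<in> cmp2 \<sigma> B" if "(x, y) \<in> ?R" for x y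
  proof -
    have "(x, y) \<in> brel 0 w \<union> brel 1 (transp (perm_diagram k \<sigma>))" using that R by simp
    then show ?thesis
    proof (rule UnE)
      assume 2: "(x, y) \<in> brel 0 w"
      then obtain B where "B \<in> w" "x \<in> lift 0 ` B" "y \<in> lift 0 ` B" unfolding brel_def by blast
      then show ?thesis unfolding cmp2_def by blast
    next
      assume 1: "(x, y) \<in> brel 1 (transp (perm_diagram k \<sigma>))"
      from 1 obtain j where j: "j \<in> {1..k}" "x \<in> {(j, 1), (\<sigma> j, Suc 1)}" "y \<in> {(j, 1), (\<sigma> j, Suc 1)}"
        using brel_tperm_D[OF 1] by blast
      obtain B where B: "B \<in> w" "(j, True) \<in> B" using part_block[OF w j(1)] by blast
      have "(\<sigma> j, Suc 1) \<in> cmp2 \<sigma> B" "(j, 1) \<in> cmp2 \<sigma> B"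
        using B(2) unfolding cmp2_def by (force simp: lift_simps)+
      then show ?thesis using j B(1) by blast
    qed
  qed
  show "lift 0 ` B \<subseteq> cmp2 \<sigma> B" for B unfolding cmp2_def by blast
  show "lift 0 ` B \<noteq> {}" if "B \<in> w" for B using part_ne[OF w that] by blast
  show "(x, y) \<in> ?R" if "B \<in> w" "x \<in> lift 0 ` B" "y \<in> lift 0 ` B" for B x y
    unfolding R using that unfolding brel_def by blast
  show "\<exists>a\<in>lift 0 ` B. (z, a) \<in> ?R \<and> (a, z) \<in> ?R" if B: "B \<in> w" "z \<in> cmp2 \<sigma> B" for B z
  proof -
    consider (a) u where "u \<in> B" "z = lift 0 u" | (b) i where "(i, True) \<in> B" "z = (\<sigma> i, 2)"
      using B(2) unfolding cmp2_def by blast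
    then show ?thesis
    proof cases
      case a
      then show ?thesis unfolding R using brel_refl[OF B(1)] by blast
    next
      case b
      then have i: "i \<in> {1..k}" using part_sub[OF w B(1)] by blast
      have "(z, (i, 1)) \<in> brel 1 (transp (perm_diagram k \<sigma>))" "((i, 1), z) \<in> brel 1 (transp (perm_diagram k \<sigma>))"
        using brel_tperm_I[OF i] b by (auto simp: numeral_2_eq_2)
      moreover have "(i, 1) \<in> lift 0 ` B" using b(1) by (force simp: lift_simps)
      ultimately show ?thesis unfolding R by blast
    qed
  qed
qed

lemma unembed_bot: "unembed 2 ` (cmp2 \<sigma> B \<inter> outer 2) = fb \<sigma> ` B"
proof (intro set_eqI iffI)
  fix v assume "v \<in> unembed 2 ` (cmp2 \<sigma> B \<inter> outer 2)"
  then obtain z where z: "z \<in> cmp2 \<sigma> B" "z \<in> outer 2" "v = unembed 2 z" by blast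
  from z(1) consider (a) u where "u \<in> B" "z = lift 0 u" | (b) i where "(i, True) \<in> B" "z = (\<sigma> i, 2)"
    unfolding cmp2_def by blast
  then show "v \<in> fb \<sigma> ` B"
  proof cases
    case a
    obtain i b where u: "u = (i, b)" by fastforce
    show ?thesis
    proof (cases b)
      case False
      then have "v = (i, False)" using a u z(3) by (simp add: lift_simps unembed_def)
      then show ?thesis using a(1) u False by (force simp: fb_def)
    next
      case True
      then show ?thesis using a u z(2) by (simp add: lift_simps outer_iff)
    qed
  next
    case b
    then have "v = (\<sigma> i, True)" using z(3) by (simp add: unembed_def)
    then show ?thesis using b(1) by (force simp: fb_def)
  qed
next
  fix v assume "v \<in> fb \<sigma> ` B"
  then obtain u where u: "u \<in> B" "v = fb \<sigma> u" by blast
  obtain i b where ib: "u = (i, b)" by fastforce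
  show "v \<in> unembed 2 ` (cmp2 \<sigma> B \<inter> outer 2)"
  proof (cases b)
    case False
    have "(i, 0) \<in> cmp2 \<sigma> B" using u ib False unfolding cmp2_def by (force simp: lift_simps)
    moreover have "(i, 0) \<in> outer 2" by (simp add: outer_iff)
    moreover have "v = unembed 2 (i, 0)" using u ib False by (simp add: fb_def unembed_def)
    ultimately show ?thesis by blast
  next
    case True
    have "(\<sigma> i, 2) \<in> cmp2 \<sigma> B" using u ib True unfolding cmp2_def by force
    moreover have "(\<sigma> i, 2) \<in> outer 2" by (simp add: outer_iff)
    moreover have "v = unembed 2 (\<sigma> i, 2)" using u ib True by (simp add: fb_def unembed_def)
    ultimately show ?thesis by blast
  qed
qed

lemma stack_bot:
  assumes sp: "\<sigma> permutes {1..k}" and w: "partition_on (verts k) w"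
  shows "w \<circ>\<^sub>d transp (perm_diagram k \<sigma>) = (\<lambda>B. fb \<sigma> ` B) ` w"
proof -
  have c: "comps [w, transp (perm_diagram k \<sigma>)] = cmp2 \<sigma> ` w" by (rule comp_sys_comps[OF comp_sys_bot[OF sp w]])
  have ne: "\<forall>B\<in>w. cmp2 \<sigma> B \<inter> outer (length [w, transp (perm_diagram k \<sigma>)]) \<noteq> {}"
  proof
    fix B assume "B \<in> w"
    then have "fb \<sigma> ` B \<noteq> {}" using part_ne[OF w] by blast
    then show "cmp2 \<sigma> B \<inter> outer (length [w, transp (perm_diagram k \<sigma>)]) \<noteq> {}"
      using unembed_bot[of \<sigma> B] by (auto simp: numeral_2_eq_2)
  qed
  have g: "\<forall>B\<in>w. unembed (length [w, transp (perm_diagram k \<sigma>)]) ` (cmp2 \<sigma> B \<inter> outer (length [w, transp (perm_diagram k \<sigma>)])) = fb \<sigma> ` B"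
    using unembed_bot[of \<sigma>] by (simp add: numeral_2_eq_2)
  show ?thesis using stack_eq(1)[OF c ne g] by (simp add: comp_def)
qed

lemma inj_ft: "\<sigma> permutes S \<Longrightarrow> inj (ft \<sigma>)"
proof -
  assume sp: "\<sigma> permutes S"
  show ?thesis unfolding inj_def
  proof (intro allI impI)
    fix x y assume e: "ft \<sigma> x = ft \<sigma> y"
    obtain i b j c where xy: "x = (i, b)" "y = (j, c)" by fastforce
    show "x = y"
    proof (cases b; cases c)
      assume "\<not> b" "\<not> c"
      then have "\<sigma> i = \<sigma> j" using e xy by (simp add: ft_def)
      then show ?thesis using permutes_inj[OF sp] xy \<open>\<not> b\<close> \<open>\<not> c\<close> by (auto dest: injD)
    qed (use e xy in \<open>auto simp: ft_def\<close>)
  qed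
qed

lemma inj_fphi: "\<sigma> permutes S \<Longrightarrow> inj (fphi \<sigma>)"
  unfolding inj_def fphi_def using permutes_inj[THEN injD] by (metis prod.collapse prod.inject)

lemma ft_verts: "\<sigma> permutes {1..k} \<Longrightarrow> ft \<sigma> ` verts k = verts k"
proof -
  assume sp: "\<sigma> permutes {1..k}"
  have im: "\<sigma> ` {1..k} = {1..k}" by (rule permutes_image[OF sp])
  show ?thesis
  proof (intro set_eqI iffI)
    fix v assume "v \<in> ft \<sigma> ` verts k"
    then obtain i b where "v = ft \<sigma> (i, b)" "i \<in> {1..k}" by (auto simp: verts_def)
    then show "v \<in> verts k" using im by (cases b) (auto simp: ft_def verts_def)
  next
    fix v assume v: "v \<in> verts k"
    obtain i b where ib: "v = (i, b)" by fastforce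
    then have i: "i \<in> {1..k}" using v by (simp add: verts_def)
    show "v \<in> ft \<sigma> ` verts k"
    proof (cases b)
      case True
      then have "v = ft \<sigma> (i, True)" using ib by (simp add: ft_def)
      then show ?thesis using i by (auto simp: verts_def)
    next
      case False
      obtain j where j: "j \<in> {1..k}" "\<sigma> j = i" using im i by (metis imageE)
      then have "v = ft \<sigma> (j, False)" using ib False by (simp add: ft_def)
      then show ?thesis using j by (auto simp: verts_def)
    qed
  qed
qed

lemma fphi_verts: "\<sigma> permutes {1..k} \<Longrightarrow> fphi \<sigma> ` verts k = verts k"
proof -
  assume sp: "\<sigma> permutes {1..k}"
  have im: "\<sigma> ` {1..k} = {1..k}" by (rule permutes_image[OF sp])
  show ?thesis
  proof (intro set_eqI iffI)
    fix v assume "v \<in> fphi \<sigma> ` verts k"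
    then obtain i b where "v = fphi \<sigma> (i, b)" "i \<in> {1..k}" by (auto simp: verts_def)
    then show "v \<in> verts k" using im by (auto simp: fphi_def verts_def)
  next
    fix v assume v: "v \<in> verts k"
    obtain i b where ib: "v = (i, b)" by fastforce
    then have i: "i \<in> {1..k}" using v by (simp add: verts_def)
    obtain j where j: "j \<in> {1..k}" "\<sigma> j = i" using im i by (metis imageE)
    then have "v = fphi \<sigma> (j, b)" using ib by (simp add: fphi_def)
    then show "v \<in> fphi \<sigma> ` verts k" using j by (auto simp: verts_def)
  qed
qed

lemma partition_img:
  assumes w: "partition_on (verts k) w" and g: "inj g" and gv: "g ` verts k = verts k"
  shows "partition_on (verts k) ((\<lambda>B. g ` B) ` w)"
proof -
  have "partition_on (g ` verts k) ((`) g ` w - {{}})"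
    by (rule partition_on_inj_image[OF w]) (use g in \<open>auto simp: inj_on_def inj_def\<close>)
  moreover have "(`) g ` w - {{}} = (\<lambda>B. g ` B) ` w" using part_ne[OF w] by auto
  ultimately show ?thesis using gv by simp
qed

lemma fb_ft: "fb \<sigma> (ft \<sigma> v) = fphi \<sigma> v"
  by (cases v) (auto simp: fb_def ft_def fphi_def)

theorem conj_diag:
  assumes sp: "\<sigma> permutes {1..k}" and w: "partition_on (verts k) w"
  shows "perm_diagram k \<sigma> \<circ>\<^sub>d w \<circ>\<^sub>d transp (perm_diagram k \<sigma>) = (\<lambda>B. fphi \<sigma> ` B) ` w"
proof -
  have v: "partition_on (verts k) ((\<lambda>B. ft \<sigma> ` B) ` w)"
    by (rule partition_img[OF w inj_ft[OF sp] ft_verts[OF sp]])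
  have "perm_diagram k \<sigma> \<circ>\<^sub>d w \<circ>\<^sub>d transp (perm_diagram k \<sigma>) = (\<lambda>B. fb \<sigma> ` B) ` ((\<lambda>B. ft \<sigma> ` B) ` w)"
    unfolding stack_top(1)[OF sp w] by (rule stack_bot[OF sp v])
  also have "\<dots> = (\<lambda>B. fphi \<sigma> ` B) ` w" by (simp add: image_image fb_ft)
  finally show ?thesis .
qed

definition cmp3 :: "(nat \<Rightarrow> nat) \<Rightarrow> vtx set \<Rightarrow> (nat \<times> nat) set" where
  "cmp3 \<sigma> B = lift 1 ` B \<union> (\<lambda>i. (\<sigma> i, 0)) ` {i. (i, False) \<in> B} \<union> (\<lambda>i. (\<sigma> i, 3)) ` {i. (i, True) \<in> B}"

lemma comp_sys_mid:
  assumes sp: "\<sigma> permutes {1..k}" and w: "partition_on (verts k) w"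
  shows "comp_sys (stack_rel [perm_diagram k \<sigma>, w, transp (perm_diagram k \<sigma>)]) (cmp3 \<sigma> ` w)"
proof (rule comp_sysI[where A = "\<lambda>B. lift 1 ` B"])
  let ?R = "stack_rel [perm_diagram k \<sigma>, w, transp (perm_diagram k \<sigma>)]"
  have R: "?R = brel 0 (perm_diagram k \<sigma>) \<union> brel 1 w \<union> brel 2 (transp (perm_diagram k \<sigma>))" by (rule stack_rel3)
  show "B = B'" if B: "B \<in> w" "B' \<in> w" "z \<in> cmp3 \<sigma> B" "z \<in> cmp3 \<sigma> B'" for B B' z
  proof -
    have lv: "\<exists>i. (i, False) \<in> C \<and> z = (\<sigma> i, 0)" if h: "snd z = 0" "z \<in> cmp3 \<sigma> C" for C
      using h(2) unfolding cmp3_def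
    proof (elim UnE imageE)
      fix u assume "u \<in> C" "z = lift 1 u" then show ?thesis using h(1) lift_level[of 1 u] by simp
    next
      fix i assume "i \<in> {i. (i, False) \<in> C}" "z = (\<sigma> i, 0)" then show ?thesis by blast
    next
      fix i assume "i \<in> {i. (i, True) \<in> C}" "z = (\<sigma> i, 3)" then show ?thesis using h(1) by simp
    qed
    have lv3: "\<exists>i. (i, True) \<in> C \<and> z = (\<sigma> i, 3)" if h: "snd z = 3" "z \<in> cmp3 \<sigma> C" for C
      using h(2) unfolding cmp3_def
    proof (elim UnE imageE)
      fix u assume "u \<in> C" "z = lift 1 u" then show ?thesis using h(1) lift_level_le[of 1 u] by simp
    next
      fix i assume "i \<in> {i. (i, False) \<in> C}" "z = (\<sigma> i, 0)" then show ?thesis using h(1) by simp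
    next
      fix i assume "i \<in> {i. (i, True) \<in> C}" "z = (\<sigma> i, 3)" then show ?thesis by blast
    qed
    have lv1: "\<exists>u\<in>C. z = lift 1 u" if h: "snd z \<noteq> 0" "snd z \<noteq> 3" "z \<in> cmp3 \<sigma> C" for C
      using h(3) unfolding cmp3_def
    proof (elim UnE imageE)
      fix u assume "u \<in> C" "z = lift 1 u" then show ?thesis by blast
    next
      fix i assume "i \<in> {i. (i, False) \<in> C}" "z = (\<sigma> i, 0)" then show ?thesis using h(1) by simp
    next
      fix i assume "i \<in> {i. (i, True) \<in> C}" "z = (\<sigma> i, 3)" then show ?thesis using h(2) by simp
    qed
    show ?thesis
    proof (cases "snd z = 0")
      case True
      obtain i i' where "(i, False) \<in> B" "z = (\<sigma> i, 0)" "(i', False) \<in> B'" "z = (\<sigma> i', 0)"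
        using lv[OF True B(3)] lv[OF True B(4)] by blast
      moreover have "i = i'" using calculation permutes_inj[OF sp] by (auto dest: injD)
      ultimately show ?thesis using part_disj[OF w B(1,2)] by blast
    next
      case F0: False
      show ?thesis
      proof (cases "snd z = 3")
        case True
        obtain i i' where "(i, True) \<in> B" "z = (\<sigma> i, 3)" "(i', True) \<in> B'" "z = (\<sigma> i', 3)"
          using lv3[OF True B(3)] lv3[OF True B(4)] by blast
        moreover have "i = i'" using calculation permutes_inj[OF sp] by (auto dest: injD)
        ultimately show ?thesis using part_disj[OF w B(1,2)] by blast
      next
        case False
        obtain u u' where "u \<in> B" "z = lift 1 u" "u' \<in> B'" "z = lift 1 u'"
          using lv1[OF F0 False B(3)] lv1[OF F0 False B(4)] by blast
        moreover have "u = u'" using calculation lift_inj by metis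
        ultimately show ?thesis using part_disj[OF w B(1,2)] by blast
      qed
    qed
  qed
  show "(z, z) \<in> ?R" if B: "B \<in> w" "z \<in> cmp3 \<sigma> B" for B z
  proof -
    consider (a) u where "u \<in> B" "z = lift 1 u" | (b) i where "(i, False) \<in> B" "z = (\<sigma> i, 0)"
      | (c) i where "(i, True) \<in> B" "z = (\<sigma> i, 3)"
      using B(2) unfolding cmp3_def by blast
    then show ?thesis
    proof cases
      case a then show ?thesis unfolding R using brel_refl[OF B(1)] by blast
    next
      case b
      then have "i \<in> {1..k}" using part_sub[OF w B(1)] by blast
      then have "(z, z) \<in> brel 0 (perm_diagram k \<sigma>)" using brel_perm_I[of i k z \<sigma> 0 z] b(2) by simp
      then show ?thesis unfolding R by blast
    next
      case c
      then have "i \<in> {1..k}" using part_sub[OF w B(1)] by blast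
      then have "(z, z) \<in> brel 2 (transp (perm_diagram k \<sigma>))"
        using brel_tperm_I[of i k z 2 \<sigma> z] c(2) by (simp add: numeral_3_eq_3 numeral_2_eq_2)
      then show ?thesis unfolding R by blast
    qed
  qed
  show "\<exists>B\<in>w. x \<in> cmp3 \<sigma> B \<and> y \<in> cmp3 \<sigma> B" if xy: "(x, y) \<in> ?R" for x y
  proof -
    have "(x, y) \<in> brel 0 (perm_diagram k \<sigma>) \<or> (x, y) \<in> brel 1 w \<or> (x, y) \<in> brel 2 (transp (perm_diagram k \<sigma>))"
      using xy R by simp
    then show ?thesis
    proof (elim disjE)
      assume 1: "(x, y) \<in> brel 0 (perm_diagram k \<sigma>)"
      from 1 obtain j where j: "j \<in> {1..k}" "x \<in> {(\<sigma> j, 0), (j, Suc 0)}" "y \<in> {(\<sigma> j, 0), (j, Suc 0)}"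
        using brel_perm_D[OF 1] by blast
      obtain B where B: "B \<in> w" "(j, False) \<in> B" using part_block[OF w j(1)] by blast
      have "(\<sigma> j, 0) \<in> cmp3 \<sigma> B" "(j, Suc 0) \<in> cmp3 \<sigma> B"
        using B(2) unfolding cmp3_def by (force simp: lift_simps)+
      then show ?thesis using j B(1) by blast
    next
      assume 2: "(x, y) \<in> brel 1 w"
      then obtain B where "B \<in> w" "x \<in> lift 1 ` B" "y \<in> lift 1 ` B" unfolding brel_def by blast
      then show ?thesis unfolding cmp3_def by blast
    next
      assume 3: "(x, y) \<in> brel 2 (transp (perm_diagram k \<sigma>))"
      from 3 obtain j where j: "j \<in> {1..k}" "x \<in> {(j, 2), (\<sigma> j, Suc 2)}" "y \<in> {(j, 2), (\<sigma> j, Suc 2)}"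
        using brel_tperm_D[OF 3] by blast
      obtain B where B: "B \<in> w" "(j, True) \<in> B" using part_block[OF w j(1)] by blast
      have "(\<sigma> j, Suc 2) \<in> cmp3 \<sigma> B" "(j, 2) \<in> cmp3 \<sigma> B"
        using B(2) unfolding cmp3_def by (force simp: lift_simps numeral_2_eq_2 numeral_3_eq_3)+
      then show ?thesis using j B(1) by blast
    qed
  qed
  show "lift 1 ` B \<subseteq> cmp3 \<sigma> B" for B unfolding cmp3_def by blast
  show "lift 1 ` B \<noteq> {}" if "B \<in> w" for B using part_ne[OF w that] by blast
  show "(x, y) \<in> ?R" if "B \<in> w" "x \<in> lift 1 ` B" "y \<in> lift 1 ` B" for B x y
    unfolding R using that unfolding brel_def by blast
  show "\<exists>a\<in>lift 1 ` B. (z, a) \<in> ?R \<and> (a, z) \<in> ?R" if B: "B \<in> w" "z \<in> cmp3 \<sigma> B" for B z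
  proof -
    consider (a) u where "u \<in> B" "z = lift 1 u" | (b) i where "(i, False) \<in> B" "z = (\<sigma> i, 0)"
      | (c) i where "(i, True) \<in> B" "z = (\<sigma> i, 3)"
      using B(2) unfolding cmp3_def by blast
    then show ?thesis
    proof cases
      case a
      then show ?thesis unfolding R using brel_refl[OF B(1)] by blast
    next
      case b
      then have i: "i \<in> {1..k}" using part_sub[OF w B(1)] by blast
      have "(z, (i, Suc 0)) \<in> brel 0 (perm_diagram k \<sigma>)" "((i, Suc 0), z) \<in> brel 0 (perm_diagram k \<sigma>)"
        using brel_perm_I[OF i] b by auto
      moreover have "(i, Suc 0) \<in> lift 1 ` B" using b(1) by (force simp: lift_simps)
      ultimately show ?thesis unfolding R by blast
    next
      case c
      then have i: "i \<in> {1..k}" using part_sub[OF w B(1)] by blast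
      have "(z, (i, 2)) \<in> brel 2 (transp (perm_diagram k \<sigma>))" "((i, 2), z) \<in> brel 2 (transp (perm_diagram k \<sigma>))"
        using brel_tperm_I[OF i] c by (auto simp: numeral_2_eq_2 numeral_3_eq_3)
      moreover have "(i, 2) \<in> lift 1 ` B" using c(1) by (force simp: lift_simps numeral_2_eq_2)
      ultimately show ?thesis unfolding R by blast
    qed
  qed
qed


definition conjw :: "(nat \<Rightarrow> nat) \<Rightarrow> diagram \<Rightarrow> diagram" where
  "conjw \<sigma> w = (\<lambda>B. fphi \<sigma> ` B) ` w"

section \<open>Planar permutation diagrams are trivial\<close>

lemma strict_mono_perm_id:
  fixes \<sigma> :: "nat \<Rightarrow> nat"
  assumes sp: "\<sigma> permutes {1..k}" and mono: "\<forall>a\<in>{1..k}. \<forall>b\<in>{1..k}. a < b \<longrightarrow> \<sigma> a < \<sigma> b"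
  shows "\<sigma> = id"
proof -
  have inr: "\<sigma> j \<in> {1..k}" if "j \<in> {1..k}" for j using permutes_in_image[OF sp] that by blast
  have ge: "j \<in> {1..k} \<Longrightarrow> j \<le> \<sigma> j" for j
  proof (induction j)
    case 0 then show ?case by simp
  next
    case (Suc j)
    show ?case
    proof (cases "j = 0")
      case True then show ?thesis using inr[OF Suc.prems] by simp
    next
      case False
      then have j: "j \<in> {1..k}" using Suc.prems by auto
      have "\<sigma> j < \<sigma> (Suc j)" using mono j Suc.prems by auto
      then show ?thesis using Suc.IH[OF j] by simp
    qed
  qed
  have le: "k - n \<in> {1..k} \<Longrightarrow> \<sigma> (k - n) \<le> k - n" for n
  proof (induction n)
    case 0 then show ?case using inr[of k] by auto
  next
    case (Suc n)
    have a: "k - n \<in> {1..k}" using Suc.prems by auto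
    have "k - Suc n < k - n" using Suc.prems by auto
    then have "\<sigma> (k - Suc n) < \<sigma> (k - n)" using mono a Suc.prems by blast
    then show ?case using Suc.IH[OF a] Suc.prems by auto
  qed
  show ?thesis
  proof
    fix j show "\<sigma> j = id j"
    proof (cases "j \<in> {1..k}")
      case True
      have "\<sigma> (k - (k - j)) \<le> k - (k - j)" using le[of "k - j"] True by auto
      then show ?thesis using ge[OF True] True by auto
    next
      case False then show ?thesis using permutes_not_in[OF sp] by simp
    qed
  qed
qed

lemma planar_perm_id:
  assumes sp: "\<sigma> permutes {1..k}" and pl: "planar k (perm_diagram k \<sigma>)"
  shows "\<sigma> = id"
proof (rule strict_mono_perm_id[OF sp], intro ballI impI)
  fix a b assume a: "a \<in> {1..k}" and b: "b \<in> {1..k}" and ab: "a < b"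
  show "\<sigma> a < \<sigma> b"
  proof (rule ccontr)
    assume "\<not> \<sigma> a < \<sigma> b"
    moreover have "\<sigma> a \<noteq> \<sigma> b" using ab permutes_inj[OF sp] by (auto dest: injD)
    ultimately have lt: "\<sigma> b < \<sigma> a" by simp
    have sa: "\<sigma> a \<le> k" using permutes_in_image[OF sp] a by auto
    define B where "B = {(\<sigma> b, False), (b, True)}"
    define C where "C = {(\<sigma> a, False), (a, True)}"
    have B: "B \<in> perm_diagram k \<sigma>" using b by (auto simp: B_def perm_diagram_def)
    have C: "C \<in> perm_diagram k \<sigma>" using a by (auto simp: C_def perm_diagram_def)
    have BC: "B \<noteq> C" using ab by (auto simp: B_def C_def)
    have "pos k (\<sigma> b, False) < pos k (\<sigma> a, False)" "pos k (\<sigma> a, False) < pos k (b, True)"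
      "pos k (b, True) < pos k (a, True)" using lt sa ab b by (auto simp: pos_def)
    then have "\<exists>x\<in>B. \<exists>z\<in>B. \<exists>y\<in>C. \<exists>e\<in>C. pos k x < pos k y \<and> pos k y < pos k z \<and> pos k z < pos k e"
      unfolding B_def C_def
      by (intro bexI[of _ "(\<sigma> b, False)"] bexI[of _ "(b, True)"] bexI[of _ "(\<sigma> a, False)"] bexI[of _ "(a, True)"] conjI) auto
    then have "\<exists>B\<in>perm_diagram k \<sigma>. \<exists>C\<in>perm_diagram k \<sigma>. B \<noteq> C \<and> (\<exists>x\<in>B. \<exists>z\<in>B. \<exists>y\<in>C. \<exists>e\<in>C.
       pos k x < pos k y \<and> pos k y < pos k z \<and> pos k z < pos k e)"
      using B C BC by (intro bexI[of _ B] bexI[of _ C] conjI)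
    then show False using pl unfolding planar_def by blast
  qed
qed

lemma fphi_snd: "snd (fphi \<sigma> v) = snd v"
  by (simp add: fphi_def)

lemma fphi_top: "fphi \<sigma> ` B \<inter> top_row = fphi \<sigma> ` (B \<inter> top_row)"
  by (auto simp: top_row_def fphi_def)

lemma fphi_bot: "fphi \<sigma> ` B \<inter> bot_row = fphi \<sigma> ` (B \<inter> bot_row)"
  by (auto simp: bot_row_def fphi_def)

lemma prop_blocks_conjw: "prop_blocks (conjw \<sigma> w) = (\<lambda>B. fphi \<sigma> ` B) ` prop_blocks w"
proof -
  have e: "\<And>B. (fphi \<sigma> ` B \<inter> top_row \<noteq> {} \<and> fphi \<sigma> ` B \<inter> bot_row \<noteq> {}) = (B \<inter> top_row \<noteq> {} \<and> B \<inter> bot_row \<noteq> {})"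
    by (simp add: fphi_top fphi_bot)
  have "{X \<in> (\<lambda>B. fphi \<sigma> ` B) ` w. X \<inter> top_row \<noteq> {} \<and> X \<inter> bot_row \<noteq> {}} =
     (\<lambda>B. fphi \<sigma> ` B) ` {B \<in> w. fphi \<sigma> ` B \<inter> top_row \<noteq> {} \<and> fphi \<sigma> ` B \<inter> bot_row \<noteq> {}}" by blast
  then show ?thesis unfolding prop_blocks_def conjw_def e .
qed

lemma inj_img: "inj f \<Longrightarrow> inj_on (\<lambda>B. f ` B) X"
  by (auto simp: inj_on_def inj_image_eq_iff)

lemma pn_conjw: "\<sigma> permutes S \<Longrightarrow> pn (conjw \<sigma> w) = pn w"
  unfolding pn_def prop_blocks_conjw by (rule card_image[OF inj_img[OF inj_fphi]])

lemma conjw_transp: "transp (conjw \<sigma> w) = conjw \<sigma> (transp w)"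
proof -
  have "(\<lambda>v. (fst v, \<not> snd v)) ` fphi \<sigma> ` B = fphi \<sigma> ` (\<lambda>v. (fst v, \<not> snd v)) ` B" for B
    by (simp add: image_image fphi_def)
  then show ?thesis unfolding transp_def conjw_def image_image by simp
qed

lemma planar_id_conjw: "conjw id w = w"
proof -
  have "fphi id = id" by (auto simp: fphi_def)
  then show ?thesis by (simp add: conjw_def)
qed

theorem conjw_sym:
  assumes sp: "\<sigma> permutes {1..k}" and dA: "perm_diagram k \<sigma> \<in> diagrams A k"
    and w: "w \<in> sym_mdiagrams A k m"
  shows "conjw \<sigma> w \<in> sym_mdiagrams A k m"
proof -
  have wp: "partition_on (verts k) w" and wa: "alg_cond A k w" and wt: "transp w = w"
    and wb: "\<forall>B\<in>w. B \<subseteq> top_row \<or> B \<subseteq> bot_row \<or> (\<exists>S. B = S \<times> UNIV)" and wm: "pn w = m"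
    using w by (auto simp: sym_mdiagrams_def diagrams_def)
  have da: "alg_cond A k (perm_diagram k \<sigma>)" using dA by (simp add: diagrams_def)
  have ij: "inj (fphi \<sigma>)" by (rule inj_fphi[OF sp])
  have cp: "partition_on (verts k) (conjw \<sigma> w)"
    unfolding conjw_def by (rule partition_img[OF wp ij fphi_verts[OF sp]])
  have cardB: "card (fphi \<sigma> ` X) = card X" for X by (rule card_image) (use ij in \<open>auto simp: inj_on_def inj_def\<close>)
  have ca: "alg_cond A k (conjw \<sigma> w)"
  proof (cases A)
    case AP then show ?thesis by simp
  next
    case AR then show ?thesis using wa by (auto simp: conjw_def rook_blocks_def fphi_top fphi_bot cardB)
  next
    case AB then show ?thesis using wa by (auto simp: conjw_def brauer_blocks_def cardB)
  next
    case ARB then show ?thesis using wa by (auto simp: conjw_def rb_blocks_def cardB)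
  next
    case ATL
    then have "\<sigma> = id" using planar_perm_id[OF sp] da by simp
    then show ?thesis using wa ATL by (simp add: planar_id_conjw)
  next
    case AM
    then have "\<sigma> = id" using planar_perm_id[OF sp] da by simp
    then show ?thesis using wa AM by (simp add: planar_id_conjw)
  next
    case APR
    then have "\<sigma> = id" using planar_perm_id[OF sp] da by simp
    then show ?thesis using wa APR by (simp add: planar_id_conjw)
  qed
  have ct: "transp (conjw \<sigma> w) = conjw \<sigma> w" using wt conjw_transp by metis
  have cb: "\<forall>B\<in>conjw \<sigma> w. B \<subseteq> top_row \<or> B \<subseteq> bot_row \<or> (\<exists>S. B = S \<times> UNIV)"
  proof
    fix B' assume "B' \<in> conjw \<sigma> w"
    then obtain B where B: "B \<in> w" "B' = fphi \<sigma> ` B" by (auto simp: conjw_def)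
    consider "B \<subseteq> top_row" | "B \<subseteq> bot_row" | S where "B = S \<times> UNIV" using wb B(1) by blast
    then show "B' \<subseteq> top_row \<or> B' \<subseteq> bot_row \<or> (\<exists>S. B' = S \<times> UNIV)"
    proof cases
      case 1 then show ?thesis using B(2) by (auto simp: top_row_def fphi_def)
    next
      case 2 then show ?thesis using B(2) by (auto simp: bot_row_def fphi_def)
    next
      case 3
      have "B' = (\<sigma> ` S) \<times> UNIV" using B(2) 3 by (auto simp: fphi_def image_iff)
      then show ?thesis by blast
    qed
  qed
  have cm: "pn (conjw \<sigma> w) = m" using pn_conjw[OF sp] wm by simp
  show ?thesis using cp ca ct cb cm by (simp add: sym_mdiagrams_def diagrams_def)
qed

lemma rank_bij:
  fixes f :: "'a \<Rightarrow> nat"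
  assumes fin: "finite S" and inj: "inj_on f S"
  shows "bij_betw (\<lambda>B. Suc (card {C \<in> S. f C < f B})) S {1..card S}"
proof -
  let ?r = "\<lambda>B. Suc (card {C \<in> S. f C < f B})"
  have lt: "?r B < ?r B'" if B: "B \<in> S" "B' \<in> S" "f B < f B'" for B B'
  proof -
    have "{C \<in> S. f C < f B} \<subset> {C \<in> S. f C < f B'}" using B by auto
    then have "card {C \<in> S. f C < f B} < card {C \<in> S. f C < f B'}"
      by (rule psubset_card_mono[rotated]) (use fin in simp)
    then show ?thesis by simp
  qed
  have i: "inj_on ?r S"
  proof (rule inj_onI)
    fix B B' assume B: "B \<in> S" "B' \<in> S" "?r B = ?r B'"
    show "B = B'"
    proof (rule ccontr)
      assume "B \<noteq> B'"
      then have "f B \<noteq> f B'" using inj B by (auto dest: inj_onD)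
      then have "f B < f B' \<or> f B' < f B" by auto
      then show False using lt[of B B'] lt[of B' B] B by auto
    qed
  qed
  have sub: "?r ` S \<subseteq> {1..card S}"
  proof
    fix x assume "x \<in> ?r ` S"
    then obtain B where B: "B \<in> S" "x = ?r B" by blast
    have "{C \<in> S. f C < f B} \<subseteq> S - {B}" by auto
    then have "card {C \<in> S. f C < f B} \<le> card (S - {B})" by (rule card_mono[rotated]) (use fin in simp)
    also have "\<dots> < card S" using B(1) fin by (rule card_Diff1_less[rotated])
    finally show "x \<in> {1..card S}" using B(2) by simp
  qed
  have "card (?r ` S) = card {1..card S}" using card_image[OF i] by simp
  then have "?r ` S = {1..card S}" using sub by (intro card_subset_eq) auto
  then show ?thesis using i by (simp add: bij_betw_def)
qed

lemma finite_part: "partition_on (verts k) w \<Longrightarrow> finite w"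
proof -
  assume w: "partition_on (verts k) w"
  have "finite (verts k)" by (simp add: verts_def)
  then have "finite (\<Union>w)" using partition_onD1[OF w] by simp
  then show ?thesis by (rule finite_UnionD)
qed

lemma maxtop_in:
  assumes w: "partition_on (verts k) w" and B: "B \<in> prop_blocks w"
  shows "(maxtop B, False) \<in> B"
proof -
  have Bw: "B \<in> w" and t: "B \<inter> top_row \<noteq> {}" using B by (auto simp: prop_blocks_def)
  have fin: "finite {i. (i, False) \<in> B}"
  proof (rule finite_subset)
    show "{i. (i, False) \<in> B} \<subseteq> {1..k}" using part_sub[OF w Bw] by blast
  qed simp
  have ne: "{i. (i, False) \<in> B} \<noteq> {}" using t by (auto simp: top_row_def)
  show ?thesis using Max_in[OF fin ne] by (simp add: maxtop_def)
qed

lemma maxtop_inj: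
  assumes w: "partition_on (verts k) w"
  shows "inj_on maxtop (prop_blocks w)"
proof (rule inj_onI)
  fix B B' assume B: "B \<in> prop_blocks w" "B' \<in> prop_blocks w" "maxtop B = maxtop B'"
  have "(maxtop B, False) \<in> B" using maxtop_in[OF w B(1)] .
  moreover have "(maxtop B, False) \<in> B'" using maxtop_in[OF w B(2)] B(3) by simp
  moreover have "B \<in> w" "B' \<in> w" using B by (auto simp: prop_blocks_def)
  ultimately show "B = B'" using part_disj[OF w] by metis
qed

lemma pidx_bij:
  assumes w: "partition_on (verts k) w"
  shows "bij_betw (pidx w) (prop_blocks w) {1..pn w}"
proof -
  have fin: "finite (prop_blocks w)" using finite_part[OF w] by (simp add: prop_blocks_def)
  have "pidx w = (\<lambda>B. Suc (card {C \<in> prop_blocks w. maxtop C < maxtop B}))"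
    by (simp add: pidx_def fun_eq_iff)
  then show ?thesis using rank_bij[OF fin maxtop_inj[OF w]] by (simp add: pn_def)
qed

section \<open>The permutation sigma\<close>

lemma cmp3_embed:
  assumes "embed 3 y \<in> cmp3 \<sigma> P"
  shows "y \<in> fphi \<sigma> ` P"
proof -
  obtain a b where y: "y = (a, b)" by fastforce
  show ?thesis
  proof (cases b)
    case False
    then have e: "embed 3 y = (a, 0)" using y by (simp add: embed_def)
    show ?thesis using assms unfolding e cmp3_def
    proof (elim UnE imageE)
      fix u assume "u \<in> P" "(a, 0::nat) = lift 1 u"
      then have "snd (lift 1 u) = 0" by (metis snd_conv)
      then show ?thesis using lift_level[of 1 u] by simp
    next
      fix i assume "i \<in> {i. (i, False) \<in> P}" "(a, 0::nat) = (\<sigma> i, 0)"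
      then have "y = fphi \<sigma> (i, False)" using y False by (simp add: fphi_def)
      then show ?thesis using \<open>i \<in> {i. (i, False) \<in> P}\<close> by blast
    next
      fix i assume "i \<in> {i. (i, True) \<in> P}" "(a, 0::nat) = (\<sigma> i, 3)" then show ?thesis by simp
    qed
  next
    case True
    then have e: "embed 3 y = (a, 3)" using y by (simp add: embed_def)
    show ?thesis using assms unfolding e cmp3_def
    proof (elim UnE imageE)
      fix u assume "u \<in> P" "(a, 3::nat) = lift 1 u"
      then have "snd (lift 1 u) = 3" by (metis snd_conv)
      then show ?thesis using lift_level_le[of 1 u] by simp
    next
      fix i assume "i \<in> {i. (i, False) \<in> P}" "(a, 3::nat) = (\<sigma> i, 0)" then show ?thesis by simp
    next
      fix i assume "i \<in> {i. (i, True) \<in> P}" "(a, 3::nat) = (\<sigma> i, 3)"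
      then have "y = fphi \<sigma> (i, True)" using y True by (simp add: fphi_def)
      then show ?thesis using \<open>i \<in> {i. (i, True) \<in> P}\<close> by blast
    qed
  qed
qed

lemma cmp3_fphi: "x \<in> P \<Longrightarrow> embed 3 (fphi \<sigma> x) \<in> cmp3 \<sigma> P"
proof -
  assume x: "x \<in> P"
  obtain a b where ab: "x = (a, b)" by fastforce
  show ?thesis
  proof (cases b)
    case True
    then have e: "embed 3 (fphi \<sigma> x) = (\<sigma> a, 3)" using ab by (simp add: embed_def fphi_def)
    have "(a, True) \<in> P" using x ab True by simp
    then show ?thesis unfolding cmp3_def e by blast
  next
    case False
    then have e: "embed 3 (fphi \<sigma> x) = (\<sigma> a, 0)" using ab by (simp add: embed_def fphi_def)
    have "(a, False) \<in> P" using x ab False by simp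
    then show ?thesis unfolding cmp3_def e by blast
  qed
qed

lemma lift_cmp3: "x \<in> P \<Longrightarrow> lift 1 x \<in> cmp3 \<sigma> P"
  unfolding cmp3_def by blast

lemma sigma_dw_val:
  assumes sp: "\<sigma> permutes {1..k}" and w: "partition_on (verts k) w" and P: "P \<in> prop_blocks w"
  shows "sigma_dw (perm_diagram k \<sigma>) w (pidx w P) = pidx (conjw \<sigma> w) (fphi \<sigma> ` P)"
proof -
  let ?d = "perm_diagram k \<sigma>"
  let ?R = "stack_rel [?d, w, transp ?d]"
  have cs: "comp_sys ?R (cmp3 \<sigma> ` w)" by (rule comp_sys_mid[OF sp w])
  have cw: "?d \<circ>\<^sub>d w \<circ>\<^sub>d transp ?d = conjw \<sigma> w" unfolding conjw_def by (rule conj_diag[OF sp w])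
  have cwp: "partition_on (verts k) (conjw \<sigma> w)"
    unfolding conjw_def by (rule partition_img[OF w inj_fphi[OF sp] fphi_verts[OF sp]])
  have pb: "bij_betw (pidx w) (prop_blocks w) {1..pn w}" by (rule pidx_bij[OF w])
  have i: "pidx w P \<in> {1..pn w}" using pb P by (auto simp: bij_betw_def)
  have Pw: "P \<in> w" using P by (simp add: prop_blocks_def)
  have fP: "fphi \<sigma> ` P \<in> prop_blocks (conjw \<sigma> w)" using P prop_blocks_conjw by blast
  let ?j0 = "pidx (conjw \<sigma> w) (fphi \<sigma> ` P)"
  let ?Pr = "\<lambda>j. \<exists>P'\<in>prop_blocks w. \<exists>Q\<in>prop_blocks (?d \<circ>\<^sub>d w \<circ>\<^sub>d transp ?d).
        pidx w P' = pidx w P \<and> pidx (?d \<circ>\<^sub>d w \<circ>\<^sub>d transp ?d) Q = j \<and>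
        (\<exists>x\<in>P'. \<exists>y\<in>Q. (lift 1 x, embed 3 y) \<in> ?R\<^sup>*)"
  have ex: "?Pr ?j0"
  proof -
    obtain x where x: "x \<in> P" using P by (auto simp: prop_blocks_def)
    have "lift 1 x \<in> cmp3 \<sigma> P" "embed 3 (fphi \<sigma> x) \<in> cmp3 \<sigma> P" using x lift_cmp3 cmp3_fphi by auto
    then have "(lift 1 x, embed 3 (fphi \<sigma> x)) \<in> ?R\<^sup>+" using cs Pw unfolding comp_sys_def by blast
    then have "(lift 1 x, embed 3 (fphi \<sigma> x)) \<in> ?R\<^sup>*" by (rule trancl_into_rtrancl)
    then show ?thesis unfolding cw using P fP x by blast
  qed
  have un: "j = ?j0" if "?Pr j" for j
  proof -
    from that obtain P' Q x y where P': "P' \<in> prop_blocks w" and Q: "Q \<in> prop_blocks (conjw \<sigma> w)"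
      and e1: "pidx w P' = pidx w P" and e2: "pidx (conjw \<sigma> w) Q = j"
      and x: "x \<in> P'" and y: "y \<in> Q" and r: "(lift 1 x, embed 3 y) \<in> ?R\<^sup>*" unfolding cw by blast
    have "P' = P" using e1 pb P' P by (auto simp: bij_betw_def dest: inj_onD)
    then have "lift 1 x \<in> cmp3 \<sigma> P" using x lift_cmp3 by blast
    then have "embed 3 y \<in> cmp3 \<sigma> P" using comp_sys_closed[OF cs r] Pw by blast
    then have yP: "y \<in> fphi \<sigma> ` P" by (rule cmp3_embed)
    have Qw: "Q \<in> conjw \<sigma> w" using Q by (simp add: prop_blocks_def)
    have "fphi \<sigma> ` P \<in> conjw \<sigma> w" using Pw by (simp add: conjw_def)
    then have "Q = fphi \<sigma> ` P" using part_disj[OF cwp Qw _ y yP] by blast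
    then show ?thesis using e2 by simp
  qed
  have "sigma_dw ?d w (pidx w P) = (THE j. ?Pr j)" using i by (simp add: sigma_dw_def)
  also have "\<dots> = ?j0" using ex un by (rule the_equality)
  finally show ?thesis .
qed

theorem sigma_dw_permutes:
  assumes sp: "\<sigma> permutes {1..k}" and w: "partition_on (verts k) w"
  shows "sigma_dw (perm_diagram k \<sigma>) w permutes {1..pn w}"
proof -
  let ?g = "sigma_dw (perm_diagram k \<sigma>) w"
  let ?w' = "conjw \<sigma> w"
  have pb: "bij_betw (pidx w) (prop_blocks w) {1..pn w}" by (rule pidx_bij[OF w])
  have cwp: "partition_on (verts k) ?w'"
    unfolding conjw_def by (rule partition_img[OF w inj_fphi[OF sp] fphi_verts[OF sp]])
  have pb': "bij_betw (pidx ?w') (prop_blocks ?w') {1..pn w}"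
    using pidx_bij[OF cwp] pn_conjw[OF sp] by simp
  have bimg: "bij_betw (\<lambda>B. fphi \<sigma> ` B) (prop_blocks w) (prop_blocks ?w')"
    unfolding bij_betw_def prop_blocks_conjw using inj_img[OF inj_fphi[OF sp]] by blast
  have binv: "bij_betw (inv_into (prop_blocks w) (pidx w)) {1..pn w} (prop_blocks w)"
    by (rule bij_betw_inv_into[OF pb])
  have comp: "bij_betw (pidx ?w' \<circ> ((\<lambda>B. fphi \<sigma> ` B) \<circ> inv_into (prop_blocks w) (pidx w))) {1..pn w} {1..pn w}"
    by (rule bij_betw_trans[OF bij_betw_trans[OF binv bimg] pb'])
  have eq: "?g i = (pidx ?w' \<circ> ((\<lambda>B. fphi \<sigma> ` B) \<circ> inv_into (prop_blocks w) (pidx w))) i" if i: "i \<in> {1..pn w}" for i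
  proof -
    define P where "P = inv_into (prop_blocks w) (pidx w) i"
    have P: "P \<in> prop_blocks w" using binv i by (auto simp: P_def bij_betw_def)
    have "pidx w P = i" using pb i by (simp add: P_def bij_betw_inv_into_right)
    then have "?g i = pidx ?w' (fphi \<sigma> ` P)" using sigma_dw_val[OF sp w P] by simp
    then show ?thesis by (simp add: P_def)
  qed
  have "bij_betw ?g {1..pn w} {1..pn w}" using comp eq by (rule bij_betw_cong[THEN iffD2, rotated]) (use eq in auto)
  moreover have "?g x = x" if "x \<notin> {1..pn w}" for x
  proof -
    have "\<not> (x \<in> {1..pn w})" using that .
    then show ?thesis unfolding sigma_dw_def by (simp only: if_False)
  qed
  ultimately show ?thesis by (rule bij_imp_permutes)
qed


lemma sym_partition: "w \<in> sym_mdiagrams A k m \<Longrightarrow> partition_on (verts k) w"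
  by (simp add: sym_mdiagrams_def diagrams_def)

lemma sym_pn: "w \<in> sym_mdiagrams A k m \<Longrightarrow> pn w = m"
  by (simp add: sym_mdiagrams_def)

lemma finite_sym: "finite (sym_mdiagrams A k m)"
proof (rule finite_subset)
  show "sym_mdiagrams A k m \<subseteq> Pow (Pow (verts k))"
    using partition_onD1 by (fastforce simp: sym_mdiagrams_def diagrams_def)
  show "finite (Pow (Pow (verts k)))" by (simp add: verts_def)
qed

lemma perm_act_zero: "perm_act \<sigma> (\<lambda>x. 0) = (\<lambda>x. 0)"
  by (simp add: perm_act_def)

context
  fixes A :: alg and n k :: nat and lam :: "nat list" and \<sigma> :: "nat \<Rightarrow> nat"
  assumes sp: "\<sigma> permutes {1..k}" and dA: "perm_diagram k \<sigma> \<in> diagrams A k"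
begin

abbreviation "\<nu> \<equiv> tl lam"
abbreviation "SS \<equiv> sym_mdiagrams A k (sum_list (tl lam))"
abbreviation "dd \<equiv> perm_diagram k \<sigma>"

lemma conj_eq: "w \<in> SS \<Longrightarrow> dd \<circ>\<^sub>d w \<circ>\<^sub>d transp dd = conjw \<sigma> w"
  unfolding conjw_def by (rule conj_diag[OF sp sym_partition])

lemma conj_in: "w \<in> SS \<Longrightarrow> conjw \<sigma> w \<in> SS"
  by (rule conjw_sym[OF sp dA])

lemma sig_perm: "w \<in> SS \<Longrightarrow> sigma_dw dd w permutes {1..sum_list \<nu>}"
  using sigma_dw_permutes[OF sp sym_partition] sym_pn by metis

lemma amod_act_eq:
  "amod_act A n k lam dd = (\<lambda>F. \<lambda>(w', t). \<Sum>w\<in>{w \<in> SS. conjw \<sigma> w = w'}.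
      perm_act (sigma_dw dd w) (\<lambda>s. F (w, s)) t)"
proof (intro ext, clarsimp simp: amod_act_def)
  fix F w' t
  have e1: "{w \<in> SS. pn (dd \<circ>\<^sub>d w \<circ>\<^sub>d transp dd) = sum_list \<nu> \<and> dd \<circ>\<^sub>d w \<circ>\<^sub>d transp dd = w'} =
            {w \<in> SS. conjw \<sigma> w = w'}"
    using conj_eq conj_in[THEN sym_pn] by auto
  have e2: "of_nat n ^ ell [dd, w] = (1::complex)" if "w \<in> SS" for w
    using stack_top(2)[OF sp sym_partition[OF that]] by simp
  show "(\<Sum>w\<in>{w \<in> SS. pn (dd \<circ>\<^sub>d w \<circ>\<^sub>d transp dd) = sum_list \<nu> \<and> dd \<circ>\<^sub>d w \<circ>\<^sub>d transp dd = w'}.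
          of_nat n ^ ell [dd, w] * perm_act (sigma_dw dd w) (\<lambda>s. F (w, s)) t) =
        (\<Sum>w\<in>{w \<in> SS. conjw \<sigma> w = w'}. perm_act (sigma_dw dd w) (\<lambda>s. F (w, s)) t)"
    unfolding e1 using e2 by (intro sum.cong) auto
qed

lemma amod_subsp: "subsp (amod A k lam)"
  unfolding subsp_def
proof (intro conjI ballI allI)
  show "(\<lambda>x. 0) \<in> amod A k lam" unfolding amod_def using subsp0[OF specht_subsp] by simp
next
  fix u v a b assume u: "u \<in> amod A k lam" and v: "v \<in> amod A k lam"
  have u1: "\<forall>w t. w \<notin> SS \<longrightarrow> u (w, t) = 0" and u2: "\<forall>w\<in>SS. (\<lambda>t. u (w, t)) \<in> specht \<nu>"
    using u by (auto simp: amod_def)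
  have v1: "\<forall>w t. w \<notin> SS \<longrightarrow> v (w, t) = 0" and v2: "\<forall>w\<in>SS. (\<lambda>t. v (w, t)) \<in> specht \<nu>"
    using v by (auto simp: amod_def)
  have "(\<lambda>t. a * u (w, t) + b * v (w, t)) \<in> specht \<nu>" if "w \<in> SS" for w
    using subspD[OF specht_subsp u2[rule_format, OF that] v2[rule_format, OF that], of a b] by simp
  then show "(\<lambda>x. a * u x + b * v x) \<in> amod A k lam" using u1 v1 by (auto simp: amod_def)
qed

lemma amod_linmap: "linmap_on (amod A k lam) (amod_act A n k lam dd)"
  unfolding linmap_on_def amod_act_eq
proof (intro conjI ballI allI)
  fix F assume F: "F \<in> amod A k lam"
  have z: "\<forall>w t. w \<notin> SS \<longrightarrow> F (w, t) = 0" and sF: "\<forall>w\<in>SS. (\<lambda>t. F (w, t)) \<in> specht \<nu>"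
    using F by (auto simp: amod_def)
  show "(\<lambda>(w', t). \<Sum>w\<in>{w \<in> SS. conjw \<sigma> w = w'}. perm_act (sigma_dw dd w) (\<lambda>s. F (w, s)) t) \<in> amod A k lam"
    unfolding amod_def
  proof (intro CollectI conjI allI impI ballI)
    fix w' t assume "w' \<notin> SS"
    then have e: "{w \<in> SS. conjw \<sigma> w = w'} = {}" using conj_in by auto
    show "(case (w', t) of (w', t) \<Rightarrow> \<Sum>w\<in>{w \<in> SS. conjw \<sigma> w = w'}. perm_act (sigma_dw dd w) (\<lambda>s. F (w, s)) t) = 0"
      unfolding case_prod_conv e sum.empty ..
  next
    fix w' assume "w' \<in> SS"
    have "(\<lambda>t. \<Sum>w\<in>{w \<in> SS. conjw \<sigma> w = w'}. 1 * perm_act (sigma_dw dd w) (\<lambda>s. F (w, s)) t) \<in> specht \<nu>"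
      by (rule subsp_sum[OF specht_subsp]) (use finite_sym perm_act_specht sig_perm sF in auto)
    then show "(\<lambda>t. case (w', t) of (w', t) \<Rightarrow> \<Sum>w\<in>{w \<in> SS. conjw \<sigma> w = w'}. perm_act (sigma_dw dd w) (\<lambda>s. F (w, s)) t) \<in> specht \<nu>"
      by simp
  qed
next
  fix u v a b
  show "(\<lambda>(w', t). \<Sum>w\<in>{w \<in> SS. conjw \<sigma> w = w'}. perm_act (sigma_dw dd w) (\<lambda>s. a * u (w, s) + b * v (w, s)) t) =
        (\<lambda>x. a * (case x of (w', t) \<Rightarrow> \<Sum>w\<in>{w \<in> SS. conjw \<sigma> w = w'}. perm_act (sigma_dw dd w) (\<lambda>s. u (w, s)) t) +
             b * (case x of (w', t) \<Rightarrow> \<Sum>w\<in>{w \<in> SS. conjw \<sigma> w = w'}. perm_act (sigma_dw dd w) (\<lambda>s. v (w, s)) t))"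
    by (auto simp: perm_act_def sum_distrib_left sum.distrib fun_eq_iff)
qed

lemma sum_prod_split: "(\<Sum>p\<in>X \<times> Y. h p) = (\<Sum>x\<in>X. \<Sum>y\<in>Y. h (x, y))"
  by (subst sum.cartesian_product) simp

lemma amod_trace:
  "chi_A A n k lam dd = (\<Sum>w\<in>{w \<in> SS. conjw \<sigma> w = w}. chi_S \<nu> (sigma_dw dd w))"
proof -
  obtain bs r where Fs0: "frame (span_of (tableaux \<nu>) (polytabloid \<nu>)) {..<r} bs (\<lambda>i u. coord bs r u i)"
    using span_of_frame[OF finite_tableaux] by blast
  define q where "q = (\<lambda>i u. coord bs r u i)"
  have Fs: "frame (specht \<nu>) {..<r} bs q" using Fs0 by (simp add: q_def specht_span)
  have sU: "subsp (specht \<nu>)" and bU: "\<forall>i\<in>{..<r}. bs i \<in> specht \<nu>"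
    and ex: "\<forall>u\<in>specht \<nu>. u = (\<lambda>x. \<Sum>i\<in>{..<r}. q i u * bs i x)"
    and dl: "\<forall>i\<in>{..<r}. \<forall>j\<in>{..<r}. q i (bs j) = (if i = j then 1 else 0)"
    and lq: "\<forall>i\<in>{..<r}. linfun_on (specht \<nu>) (q i)"
    using Fs unfolding frame_def by auto
  define I where "I = SS \<times> {..<r}"
  define b where "b = (\<lambda>(w::diagram, j::nat). \<lambda>(w'::diagram, t::tabloid). if w' = w then bs j t else 0)"
  define ph where "ph = (\<lambda>(w::diagram, j::nat) (F::diagram \<times> tabloid \<Rightarrow> complex). q j (\<lambda>t. F (w, t)))"
  have amD: "(\<lambda>t. F (w, t)) \<in> specht \<nu>" if "F \<in> amod A k lam" "w \<in> SS" for F w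
    using that by (auto simp: amod_def)
  have amZ: "F (w, t) = 0" if "F \<in> amod A k lam" "w \<notin> SS" for F w t
    using that by (auto simp: amod_def)
  have F: "frame (amod A k lam) I b ph"
    unfolding frame_def
  proof (intro conjI ballI)
    show "subsp (amod A k lam)" by (rule amod_subsp)
    show "finite I" by (simp add: I_def finite_sym)
  next
    fix p assume "p \<in> I"
    then obtain w j where p: "p = (w, j)" "w \<in> SS" "j < r" by (auto simp: I_def)
    show "b p \<in> amod A k lam" unfolding amod_def
    proof (intro CollectI conjI allI impI ballI)
      fix w' t assume "w' \<notin> SS" then show "b p (w', t) = 0" using p by (auto simp: b_def)
    next
      fix w' assume "w' \<in> SS"
      show "(\<lambda>t. b p (w', t)) \<in> specht \<nu>"
      proof (cases "w' = w")
        case True then show ?thesis using p bU by (simp add: b_def)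
      next
        case False then show ?thesis using p subsp0[OF sU] by (simp add: b_def)
      qed
    qed
  next
    fix u assume u: "u \<in> amod A k lam"
    show "u = (\<lambda>x. \<Sum>i\<in>I. ph i u * b i x)"
    proof
      fix x :: "diagram \<times> tabloid"
      obtain w' t where x: "x = (w', t)" by fastforce
      have "(\<Sum>i\<in>I. ph i u * b i x) = (\<Sum>w\<in>SS. \<Sum>j<r. q j (\<lambda>t. u (w, t)) * (if w' = w then bs j t else 0))"
        unfolding I_def sum_prod_split by (simp add: ph_def b_def x)
      also have "\<dots> = (\<Sum>w\<in>SS. if w' = w then (\<Sum>j<r. q j (\<lambda>t. u (w, t)) * bs j t) else 0)"
        by (intro sum.cong refl) auto
      also have "\<dots> = (if w' \<in> SS then (\<Sum>j<r. q j (\<lambda>t. u (w', t)) * bs j t) else 0)"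
        by (simp add: sum.delta' finite_sym)
      also have "\<dots> = u x"
      proof (cases "w' \<in> SS")
        case True
        have "(\<lambda>t. u (w', t)) = (\<lambda>x. \<Sum>i\<in>{..<r}. q i (\<lambda>t. u (w', t)) * bs i x)"
          using ex amD[OF u True] by blast
        then have "u (w', t) = (\<Sum>i\<in>{..<r}. q i (\<lambda>t. u (w', t)) * bs i t)" by (metis (no_types))
        then show ?thesis using True x by simp
      next
        case False then show ?thesis using amZ[OF u False] x by simp
      qed
      finally show "u x = (\<Sum>i\<in>I. ph i u * b i x)" by simp
    qed
  next
    fix p p' assume "p \<in> I" "p' \<in> I"
    then obtain w j w' j' where p: "p = (w, j)" "w \<in> SS" "j < r" and p': "p' = (w', j')" "w' \<in> SS" "j' < r"
      by (auto simp: I_def)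
    show "ph p (b p') = (if p = p' then 1 else 0)"
    proof (cases "w = w'")
      case True then show ?thesis using p p' dl by (simp add: ph_def b_def)
    next
      case False
      have "ph p (b p') = q j (\<lambda>t. 0)" using p p' False by (simp add: ph_def b_def)
      also have "\<dots> = 0" using linfun_zero[OF sU] lq p by simp
      finally show ?thesis using p p' False by simp
    qed
  next
    fix p assume "p \<in> I"
    then obtain w j where p: "p = (w, j)" "w \<in> SS" "j < r" by (auto simp: I_def)
    show "linfun_on (amod A k lam) (ph p)"
      unfolding linfun_on_def
    proof (intro ballI allI)
      fix u v a c assume u: "u \<in> amod A k lam" and v: "v \<in> amod A k lam"
      show "ph p (\<lambda>x. a * u x + c * v x) = a * ph p u + c * ph p v"
        using linfunD[OF lq[rule_format, of j] amD[OF u p(2)] amD[OF v p(2)], of a c] p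
        by (simp add: ph_def)
    qed
  qed
  have "chi_A A n k lam dd = (\<Sum>i\<in>I. ph i (amod_act A n k lam dd (b i)))"
    unfolding chi_A_def by (rule trace_on_frame[OF F amod_linmap])
  also have "\<dots> = (\<Sum>w\<in>SS. \<Sum>j<r. if conjw \<sigma> w = w then q j (perm_act (sigma_dw dd w) (bs j)) else 0)"
    unfolding I_def sum_prod_split
  proof (intro sum.cong refl)
    fix w j assume w: "w \<in> SS" and j: "j \<in> {..<r}"
    have inner: "(\<Sum>w0\<in>{w0 \<in> SS. conjw \<sigma> w0 = w}. perm_act (sigma_dw dd w0) (\<lambda>s. b (w, j) (w0, s)) t) =
       (if conjw \<sigma> w = w then perm_act (sigma_dw dd w) (bs j) t else 0)" for t
    proof -
      have "(\<Sum>w0\<in>{w0 \<in> SS. conjw \<sigma> w0 = w}. perm_act (sigma_dw dd w0) (\<lambda>s. b (w, j) (w0, s)) t) =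
            (\<Sum>w0\<in>{w0 \<in> SS. conjw \<sigma> w0 = w}. if w0 = w then perm_act (sigma_dw dd w0) (bs j) t else 0)"
        by (intro sum.cong refl) (auto simp: b_def perm_act_zero)
      also have "\<dots> = (if w \<in> {w0 \<in> SS. conjw \<sigma> w0 = w} then perm_act (sigma_dw dd w) (bs j) t else 0)"
        by (rule sum.delta) (simp add: finite_sym)
      finally show ?thesis using w by simp
    qed
    have "ph (w, j) (amod_act A n k lam dd (b (w, j))) =
          q j (\<lambda>t. if conjw \<sigma> w = w then perm_act (sigma_dw dd w) (bs j) t else 0)"
      unfolding amod_act_eq ph_def using inner by simp
    also have "\<dots> = (if conjw \<sigma> w = w then q j (perm_act (sigma_dw dd w) (bs j)) else 0)"
      using linfun_zero[OF sU] lq j by auto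
    finally show "ph (w, j) (amod_act A n k lam dd (b (w, j))) =
          (if conjw \<sigma> w = w then q j (perm_act (sigma_dw dd w) (bs j)) else 0)" .
  qed
  also have "\<dots> = (\<Sum>w\<in>SS. if conjw \<sigma> w = w then chi_S \<nu> (sigma_dw dd w) else 0)"
  proof (intro sum.cong refl)
    fix w assume w: "w \<in> SS"
    have "chi_S \<nu> (sigma_dw dd w) = (\<Sum>j\<in>{..<r}. q j (perm_act (sigma_dw dd w) (bs j)))"
      unfolding chi_S_def by (rule trace_on_frame[OF Fs perm_act_linmap[OF sig_perm[OF w]]])
    then show "(\<Sum>j<r. if conjw \<sigma> w = w then q j (perm_act (sigma_dw dd w) (bs j)) else 0) =
               (if conjw \<sigma> w = w then chi_S \<nu> (sigma_dw dd w) else 0)" by simp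
  qed
  also have "\<dots> = (\<Sum>w\<in>{w \<in> SS. conjw \<sigma> w = w}. chi_S \<nu> (sigma_dw dd w))"
    by (simp add: sum.inter_filter finite_sym)
  finally show ?thesis .
qed

end

lemma length_le_sum: "\<forall>x\<in>set xs. 0 < (x::nat) \<Longrightarrow> length xs \<le> sum_list xs"
  by (induction xs) auto

lemma finite_partitions: "finite {\<mu>. partition_of m \<mu>}"
proof (rule finite_subset)
  show "{\<mu>. partition_of m \<mu>} \<subseteq> {xs. set xs \<subseteq> {..m} \<and> length xs \<le> m}"
  proof
    fix \<mu> assume "\<mu> \<in> {\<mu>. partition_of m \<mu>}"
    then have p: "sum_list \<mu> = m" "\<forall>x\<in>set \<mu>. 0 < x" by (auto simp: partition_of_def)
    have "set \<mu> \<subseteq> {..m}" using member_le_sum_list[of _ \<mu>] p(1) by auto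
    moreover have "length \<mu> \<le> m" using length_le_sum[OF p(2)] p(1) by simp
    ultimately show "\<mu> \<in> {xs. set xs \<subseteq> {..m} \<and> length xs \<le> m}" by simp
  qed
  show "finite {xs. set xs \<subseteq> {..m} \<and> length xs \<le> m}" by (rule finite_lists_length_le) simp
qed

theorem mainTheorem7:
  fixes A :: alg and n k m :: nat and lam \<kappa> :: "nat list"
  assumes "2 * k \<le> n"
    and "lam \<in> Lambda A n k"
    and "m = sum_list (tl lam)"
    and "partition_of k \<kappa>"
    and "perm_diagram k (gamma \<kappa>) \<in> diagrams A k"
  shows "chi_A A n k lam (perm_diagram k (gamma \<kappa>)) =
    (\<Sum>\<mu>\<in>{\<mu>. partition_of m \<mu>}.
       of_nat (card (F_set A k m \<mu> \<kappa>)) * chi_S (tl lam) (gamma \<mu>))"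
proof -
  define \<sigma> where "\<sigma> = gamma \<kappa>"
  have sp: "\<sigma> permutes {1..k}" using gamma_permutes[of \<kappa>] assms(4) by (simp add: \<sigma>_def partition_of_def)
  have dA: "perm_diagram k \<sigma> \<in> diagrams A k" using assms(5) by (simp add: \<sigma>_def)
  define d where "d = perm_diagram k \<sigma>"
  define SS where "SS = sym_mdiagrams A k m"
  define Fix where "Fix = {w \<in> SS. conjw \<sigma> w = w}"
  define Pm where "Pm = {\<mu>. partition_of m \<mu>}"
  have m: "sum_list (tl lam) = m" using assms(3) by simp
  have T: "chi_A A n k lam d = (\<Sum>w\<in>Fix. chi_S (tl lam) (sigma_dw d w))"
    using amod_trace[OF sp dA, of n lam] by (simp add: d_def Fix_def SS_def m)
  have fin: "finite Fix" using finite_sym[of A k m] by (simp add: Fix_def SS_def)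
  have finP: "finite Pm" using finite_partitions by (simp add: Pm_def)
  have sw: "sigma_dw d w permutes {1..m}" if "w \<in> Fix" for w
    using sig_perm[OF sp dA, of w lam] that by (simp add: Fix_def SS_def d_def m)
  define mu where "mu = (\<lambda>w. THE \<mu>. partition_of m \<mu> \<and> cycle_type (sigma_dw d w) m = mset \<mu>)"
  have mu: "partition_of m (mu w) \<and> cycle_type (sigma_dw d w) m = mset (mu w)" if w: "w \<in> Fix" for w
  proof -
    obtain \<mu> where \<mu>: "partition_of m \<mu>" "cycle_type (sigma_dw d w) m = mset \<mu>"
      using exists_partition[OF sw[OF w]] by blast
    have "\<exists>!\<mu>. partition_of m \<mu> \<and> cycle_type (sigma_dw d w) m = mset \<mu>"
      using \<mu> partition_unique by (intro ex1I[of _ \<mu>]) auto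
    then show ?thesis unfolding mu_def by (rule theI')
  qed
  have mu_iff: "mu w = \<mu> \<longleftrightarrow> cycle_type (sigma_dw d w) m = mset \<mu>" if w: "w \<in> Fix" and p: "partition_of m \<mu>" for w \<mu>
  proof
    assume "mu w = \<mu>" then show "cycle_type (sigma_dw d w) m = mset \<mu>" using mu[OF w] by simp
  next
    assume h: "cycle_type (sigma_dw d w) m = mset \<mu>"
    then have "mset (mu w) = mset \<mu>" using mu[OF w] by simp
    moreover have "partition_of m (mu w)" using mu[OF w] by simp
    ultimately show "mu w = \<mu>" using partition_unique p by blast
  qed
  have chi: "chi_S (tl lam) (sigma_dw d w) = chi_S (tl lam) (gamma (mu w))" if w: "w \<in> Fix" for w
  proof -
    obtain \<tau> where \<tau>: "\<tau> permutes {1..m}" "sigma_dw d w = \<tau> \<circ> gamma (mu w) \<circ> inv \<tau>"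
      using conj_gamma[OF sw[OF w]] mu[OF w] by blast
    have gp: "gamma (mu w) permutes {1..m}" using gamma_permutes[of "mu w"] mu[OF w] by (simp add: partition_of_def)
    show ?thesis unfolding \<tau>(2) using chi_S_conj[of \<tau> "tl lam" "gamma (mu w)"] \<tau>(1) gp m by simp
  qed
  have Fs: "F_set A k m \<mu> \<kappa> = {w \<in> Fix. mu w = \<mu>}" if p: "\<mu> \<in> Pm" for \<mu>
  proof -
    have pp: "partition_of m \<mu>" using p by (simp add: Pm_def)
    have "F_set A k m \<mu> \<kappa> = {w \<in> Fix. cycle_type (sigma_dw d w) m = mset \<mu>}"
      unfolding F_set_def Fix_def SS_def d_def \<sigma>_def[symmetric]
      using conj_eq[OF sp dA, of _ lam] by (auto simp: m)
    also have "\<dots> = {w \<in> Fix. mu w = \<mu>}" using mu_iff[OF _ pp] by auto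
    finally show ?thesis .
  qed
  have "(\<Sum>w\<in>Fix. chi_S (tl lam) (sigma_dw d w)) = (\<Sum>w\<in>Fix. chi_S (tl lam) (gamma (mu w)))"
    using chi by (rule sum.cong[OF refl])
  also have "\<dots> = (\<Sum>\<mu>\<in>Pm. \<Sum>w\<in>{w. w \<in> Fix \<and> mu w = \<mu>}. chi_S (tl lam) (gamma (mu w)))"
    by (rule sum.group[OF fin finP, symmetric]) (use mu in \<open>auto simp: Pm_def\<close>)
  also have "\<dots> = (\<Sum>\<mu>\<in>Pm. of_nat (card (F_set A k m \<mu> \<kappa>)) * chi_S (tl lam) (gamma \<mu>))"
  proof (rule sum.cong[OF refl])
    fix \<mu> assume p: "\<mu> \<in> Pm"
    have "(\<Sum>w\<in>{w. w \<in> Fix \<and> mu w = \<mu>}. chi_S (tl lam) (gamma (mu w))) = (\<Sum>w\<in>{w \<in> Fix. mu w = \<mu>}. chi_S (tl lam) (gamma \<mu>))"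
      by (intro sum.cong) auto
    also have "\<dots> = of_nat (card (F_set A k m \<mu> \<kappa>)) * chi_S (tl lam) (gamma \<mu>)"
      using Fs[OF p] by simp
    finally show "(\<Sum>w\<in>{w. w \<in> Fix \<and> mu w = \<mu>}. chi_S (tl lam) (gamma (mu w))) =
       of_nat (card (F_set A k m \<mu> \<kappa>)) * chi_S (tl lam) (gamma \<mu>)" .
  qed
  finally show ?thesis using T by (simp add: d_def \<sigma>_def Pm_def)
qed


end
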